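(* Let $F:\mathcal{S}^{n\times n}\to\mathbb{R}$ be differentiable with $\|\nabla F(\boldsymbol{X}_1)-\nabla F(\boldsymbol{X}_2)\|_F\le L_F\|\boldsymbol{X}_1-\boldsymbol{X}_2\|_F$ for all $\boldsymbol{X}_1,\boldsymbol{X}_2\in\mathcal{S}^{n\times n}$, where $L_F>0$. Define $f(\boldsymbol{Q},\boldsymbol{\lambda})=F(\boldsymbol{Q}\operatorname{Diag}(\boldsymbol{\lambda})\boldsymbol{Q}^\top)$ and restrict it to $\mathcal{O}(n,n)\times\mathcal{C}$, where $\mathcal{C}\subseteq\mathbb{R}^n$ is bounded with $\|\boldsymbol{\lambda}\|\le D$ for all $\boldsymbol{\lambda}\in\mathcal{C}$. Then $f$ (with $\boldsymbol{x}=\boldsymbol{Q}$, $\boldsymbol{y}=\boldsymbol{\lambda}$) satisfies the following Lipschitz conditions: (i) there is $L_y\ge0$ with $\|\nabla_{\boldsymbol{\lambda}}f(\boldsymbol{Q},\boldsymbol{\lambda}_1)-\nabla_{\boldsymbol{\lambda}}f(\boldsymbol{Q},\boldsymbol{\lambda}_2)\|\le L_y\|\boldsymbol{\lambda}_1-\boldsymbol{\lambda}_2\|$; (ii) there is $L_x\ge1$ such that for every $\boldsymbol{\lambda}\in\mathcal{C}$, $f(\cdot,\boldsymbol{\lambda})$ has a gradient Lipschitz retraction on $\mathcal{O}(n,n)$ with constant $L_x$, with respect to the exponential map and with respect to a retraction on $\mathcal{O}(n,n)$, i.e. $f(R(\boldsymbol{Q},\boldsymbol{V}),\boldsymbol{\lambda})\le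 f(\boldsymbol{Q},\boldsymbol{\lambda})+\langle\operatorname{grad}_Qf(\boldsymbol{Q},\boldsymbol{\lambda}),\boldsymbol{V}\rangle+\frac{L_x}{2}\|\boldsymbol{V}\|_F^2$ for all $\boldsymbol{Q}\in\mathcal{O}(n,n)$, $\boldsymbol{V}\in T_{\boldsymbol{Q}}\mathcal{O}(n,n)$; (iii) there is $L_{xy}\ge0$ with $\|\nabla_{\boldsymbol{\lambda}}f(\boldsymbol{U},\boldsymbol{\lambda})-\nabla_{\boldsymbol{\lambda}}f(\boldsymbol{V},\boldsymbol{\lambda})\|\le L_{xy}\|\boldsymbol{U}-\boldsymbol{V}\|_F$ for all $\boldsymbol{U},\boldsymbol{V}\in\mathcal{O}(n,n)$, $\boldsymbol{\lambda}\in\mathcal{C}$.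
   Context: $\mathcal{S}^{n\times n}$: real symmetric matrices with the Frobenius inner product; $\mathcal{O}(n,n)$: orthogonal $n\times n$ matrices viewed as a Riemannian submanifold of $\mathbb{R}^{n\times n}$ with the Frobenius inner product; $\operatorname{grad}_Q$ the Riemannian gradient in $\boldsymbol{Q}$; $\nabla_{\boldsymbol{\lambda}}$ the Euclidean gradient in $\boldsymbol{\lambda}$. A retraction is a smooth map $R:T\mathcal{O}(n,n)\to\mathcal{O}(n,n)$ with $R(\boldsymbol{Q},\boldsymbol{0})=\boldsymbol{Q}$ and $DR(\boldsymbol{Q},\cdot)(\boldsymbol{0})=\mathrm{id}$. *)

theory Defs
  imports "HOL-Analysis.Analysis"
begin

type_synonym 'n mat = "real^'n^'n"

text \<open>Real symmetric matrices (Frobenius inner product = the inner product of real^'n^'n).\<close>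
definition sym_mats :: "('n::finite) mat set" where
  "sym_mats = {X. transpose X = X}"

definition orth_group :: "('n::finite) mat set" where
  "orth_group = {Q. orthogonal_matrix Q}"

definition tangent_orth :: "('n::finite) mat \<Rightarrow> ('n::finite) mat set" where
  "tangent_orth Q = {V. transpose Q ** V + transpose V ** Q = 0}"

definition Diag :: "real^'n \<Rightarrow> real^'n^'n" where
  "Diag l = (\<chi> i j. if i = j then l $ i else 0)"

definition eucl_grad :: "('a::real_inner \<Rightarrow> real) \<Rightarrow> 'a \<Rightarrow> 'a" where
  "eucl_grad g y = (THE G. (g has_derivative (\<lambda>h. G \<bullet> h)) (at y))"

definition proj_tangent :: "('n::finite) mat \<Rightarrow> 'n mat \<Rightarrow> 'n mat" where
  "proj_tangent Q G = (THE P. P \<in> tangent_orth Q \<and> (\<forall>V\<in>tangent_orth Q. (G - P) \<bullet> V = 0))"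

text \<open>Riemannian gradient on the Riemannian submanifold O(n,n) of R^{n x n}: the
  orthogonal projection of the Euclidean gradient (of the ambient function) onto T_Q.\<close>
definition riem_grad :: "(('n::finite) mat \<Rightarrow> real) \<Rightarrow> 'n mat \<Rightarrow> 'n mat" where
  "riem_grad g Q = proj_tangent Q (eucl_grad g Q)"

fun Ck_on :: "nat \<Rightarrow> ('a::euclidean_space \<Rightarrow> 'b::real_normed_vector) \<Rightarrow> 'a set \<Rightarrow> bool" where
  "Ck_on 0 f U = continuous_on U f"
| "Ck_on (Suc k) f U =
     (\<exists>f'. (\<forall>x\<in>U. (f has_derivative f' x) (at x)) \<and> (\<forall>v. Ck_on k (\<lambda>x. f' x v) U))"

definition smooth_on_set :: "'a set \<Rightarrow> ('a::euclidean_space \<Rightarrow> 'b::real_normed_vector) \<Rightarrow> bool" where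
  "smooth_on_set S f = (\<exists>U g. open U \<and> S \<subseteq> U \<and> (\<forall>x\<in>S. g x = f x) \<and> (\<forall>k. Ck_on k g U))"

definition tangent_bundle_orth :: "(('n::finite) mat \<times> 'n mat) set" where
  "tangent_bundle_orth = {(Q, V). Q \<in> orth_group \<and> V \<in> tangent_orth Q}"

definition is_retraction :: "(('n::finite) mat \<Rightarrow> 'n mat \<Rightarrow> 'n mat) \<Rightarrow> bool" where
  "is_retraction R \<longleftrightarrow>
     (\<forall>(Q, V)\<in>tangent_bundle_orth. R Q V \<in> orth_group) \<and>
     smooth_on_set tangent_bundle_orth (\<lambda>p. R (fst p) (snd p)) \<and>
     (\<forall>Q\<in>orth_group. R Q 0 = Q \<and>
        ((\<lambda>V. R Q V) has_derivative id) (at 0 within tangent_orth Q))"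

fun matpow :: "real^'n^'n \<Rightarrow> nat \<Rightarrow> real^'n^'n" where
  "matpow A 0 = mat 1"
| "matpow A (Suc k) = A ** matpow A k"

definition mexp :: "real^'n^'n \<Rightarrow> real^'n^'n" where
  "mexp A = (\<Sum>k. (1 / fact k) *\<^sub>R matpow A k)"

text \<open>Riemannian exponential map of O(n,n) with the (bi-invariant) Frobenius metric:
  Exp_Q(V) = Q expm(Q^T V).\<close>
definition exp_orth :: "('n::finite) mat \<Rightarrow> 'n mat \<Rightarrow> 'n mat" where
  "exp_orth Q V = Q ** mexp (transpose Q ** V)"

definition grad_lipschitz_retraction ::
  "(('n::finite) mat \<Rightarrow> real) \<Rightarrow> ('n mat \<Rightarrow> 'n mat \<Rightarrow> 'n mat) \<Rightarrow> real \<Rightarrow> bool" where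
  "grad_lipschitz_retraction g R L \<longleftrightarrow>
     (\<forall>Q\<in>orth_group. \<forall>V\<in>tangent_orth Q.
        g (R Q V) \<le> g Q + riem_grad g Q \<bullet> V + L / 2 * (norm V)\<^sup>2)"

end

theory Submission
  imports Defs
begin


lemma norm_sq_mat: "(norm (A::real^'m^'n))^2 = (\<Sum>i\<in>UNIV. \<Sum>j\<in>UNIV. (A$i$j)^2)"
  unfolding power2_norm_eq_inner by (simp add: inner_vec_def power2_eq_square)

lemma mat_mult_entry_inner: "((A::real^'k^'n) ** (B::real^'m^'k))$i$j = (A$i) \<bullet> column j B"
  by (simp add: matrix_matrix_mult_def inner_vec_def column_def)

lemma norm_sq_rows: "(norm (A::real^'m^'n))^2 = (\<Sum>i\<in>UNIV. (norm (A$i))^2)"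
  by (simp add: power2_norm_eq_inner inner_vec_def)

lemma norm_sq_cols: "(norm (B::real^'m^'n))^2 = (\<Sum>j\<in>UNIV. (norm (column j B))^2)"
proof -
  have "(\<Sum>j\<in>UNIV. (norm (column j B))^2) = (\<Sum>j\<in>UNIV. \<Sum>k\<in>UNIV. (B$k$j)^2)"
    unfolding power2_norm_eq_inner by (simp add: inner_vec_def column_def power2_eq_square)
  also have "\<dots> = (\<Sum>k\<in>UNIV. \<Sum>j\<in>UNIV. (B$k$j)^2)" by (rule sum.swap)
  finally show ?thesis by (simp add: norm_sq_mat)
qed

lemma frob_mult: "norm ((A::real^'k^'n) ** (B::real^'m^'k)) \<le> norm A * norm B"
proof -
  have "(norm (A ** B))^2 = (\<Sum>i\<in>UNIV. \<Sum>j\<in>UNIV. ((A$i) \<bullet> column j B)^2)"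
    by (simp add: norm_sq_mat mat_mult_entry_inner)
  also have "\<dots> \<le> (\<Sum>i\<in>UNIV. \<Sum>j\<in>UNIV. (norm (A$i))^2 * (norm (column j B))^2)"
  proof (intro sum_mono)
    fix i j
    have "\<bar>(A$i) \<bullet> column j B\<bar> \<le> norm (A$i) * norm (column j B)" by (rule Cauchy_Schwarz_ineq2)
    then have "\<bar>(A$i) \<bullet> column j B\<bar>^2 \<le> (norm (A$i) * norm (column j B))^2"
      by (intro power_mono) auto
    then show "((A$i) \<bullet> column j B)^2 \<le> (norm (A$i))^2 * (norm (column j B))^2"
      by (simp add: power_mult_distrib)
  qed
  also have "\<dots> = (norm A)^2 * (norm B)^2"
    unfolding norm_sq_rows[of A] norm_sq_cols[of B] sum_product by simp
  also have "\<dots> = (norm A * norm B)^2" by (simp add: power_mult_distrib)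
  finally show ?thesis by (rule power2_le_imp_le) simp
qed

lemma norm_transpose: "norm (transpose (A::real^'m^'n)) = norm A"
proof -
  have "(norm (transpose A))^2 = (norm A)^2"
    unfolding norm_sq_mat transpose_def by (simp, subst sum.swap, simp)
  then show ?thesis by (simp add: power2_eq_iff_nonneg)
qed

lemma mm_bilinear: "bounded_bilinear (\<lambda>(A::real^'k^'n) (B::real^'m^'k). A ** B)"
proof (unfold_locales)
  show "\<exists>K. \<forall>a b. norm ((a::real^'k^'n) ** (b::real^'m^'k)) \<le> norm a * norm b * K"
    by (rule exI[of _ 1]) (simp add: frob_mult)
qed (simp_all add: matrix_matrix_mult_def vec_eq_iff sum.distrib algebra_simps sum_distrib_left)

lemma inner_transpose: "(A::real^'m^'n) \<bullet> transpose B = transpose A \<bullet> B"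
  unfolding inner_vec_def transpose_def by (simp, subst sum.swap, simp add: mult.commute)

lemma inner_mm_right: "(A::real^'m^'n) \<bullet> ((B::real^'k^'n) ** (C::real^'m^'k)) = (A ** transpose C) \<bullet> B"
  apply (simp add: inner_vec_def matrix_matrix_mult_def transpose_def sum_distrib_left sum_distrib_right)
  apply (rule sum.cong[OF refl])
  apply (subst sum.swap)
  apply (simp add: mult_ac)
  done

lemma inner_mm_left: "(A::real^'m^'n) \<bullet> ((B::real^'k^'n) ** (C::real^'m^'k)) = (transpose B ** A) \<bullet> C"
proof -
  have "A \<bullet> (B ** C) = A \<bullet> transpose (transpose (B ** C))" by simp
  also have "\<dots> = transpose A \<bullet> transpose (B ** C)" by (rule inner_transpose)
  also have "\<dots> = transpose A \<bullet> (transpose C ** transpose B)" by (simp only: matrix_transpose_mul)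
  also have "\<dots> = (transpose A ** B) \<bullet> transpose C" by (simp add: inner_mm_right)
  also have "\<dots> = (transpose B ** A) \<bullet> C" by (simp add: inner_transpose matrix_transpose_mul)
  finally show ?thesis .
qed

lemma orth_norm: assumes "orthogonal_matrix (Q::real^'n^'n)" shows "norm Q = sqrt (real CARD('n))"
proof -
  have QQ: "Q ** transpose Q = mat 1" using assms by (simp add: orthogonal_matrix_def)
  have "(norm Q)^2 = (\<Sum>i\<in>UNIV. (Q ** transpose Q)$i$i)"
    unfolding norm_sq_mat by (simp add: matrix_matrix_mult_def transpose_def power2_eq_square)
  also have "\<dots> = real CARD('n)" by (simp add: QQ mat_def)
  finally show ?thesis by (simp add: real_sqrt_unique)
qed

lemma transpose_Diag: "transpose (Diag l) = Diag l"
  by (simp add: Diag_def transpose_def vec_eq_iff)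

lemma norm_Diag: "norm (Diag (l::real^'n)) = norm l"
proof -
  have "(norm (Diag l))^2 = (norm l)^2"
  proof -
    have e: "\<And>i j. (if i = j then l$i else 0)^2 = (if i = j then (l$i)^2 else (0::real))" by simp
    have v: "(norm l)^2 = (\<Sum>i\<in>UNIV. (l$i)^2)"
      unfolding power2_norm_eq_inner by (simp add: inner_vec_def power2_eq_square)
    show ?thesis unfolding norm_sq_mat v by (simp add: Diag_def e)
  qed
  then show ?thesis by (simp add: power2_eq_iff_nonneg)
qed

lemma sym_conj: "Y ** Diag l ** transpose Y \<in> sym_mats"
  by (simp add: sym_mats_def matrix_transpose_mul transpose_Diag matrix_mul_assoc)

lemma bl_transpose: "bounded_linear (transpose :: real^'m^'n \<Rightarrow> real^'n^'m)"
  apply (rule bounded_linear_intro[where K=1])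
    apply (simp add: transpose_def vec_eq_iff)
   apply (simp add: transpose_def vec_eq_iff)
  apply (simp add: norm_transpose)
  done

lemma bl_Diag: "bounded_linear (Diag :: real^'n \<Rightarrow> real^'n^'n)"
  apply (rule bounded_linear_intro[where K=1])
    apply (simp add: Diag_def vec_eq_iff)
   apply (simp add: Diag_def vec_eq_iff)
  apply (simp add: norm_Diag)
  done

lemma conj_deriv:
  "((\<lambda>Y::real^'n^'n. Y ** M ** transpose Y) has_derivative
     (\<lambda>H. H ** M ** transpose Y + Y ** M ** transpose H)) (at Y within S)"
proof -
  have d1: "((\<lambda>Y::real^'n^'n. Y ** M) has_derivative (\<lambda>H. H ** M)) (at Y within S)"
    by (rule bounded_linear_imp_has_derivative, rule bounded_bilinear.bounded_linear_left[OF mm_bilinear])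
  have d2: "((\<lambda>Y::real^'n^'n. transpose Y) has_derivative (\<lambda>H. transpose H)) (at Y within S)"
    by (rule bounded_linear_imp_has_derivative, rule bl_transpose)
  show ?thesis
    using bounded_bilinear.FDERIV[OF mm_bilinear d1 d2] by (simp add: add.commute)
qed

lemma Diag_conj_deriv:
  "((\<lambda>l. (Q::real^'n^'n) ** Diag l ** transpose Q) has_derivative
     (\<lambda>h. Q ** Diag h ** transpose Q)) (at l within S)"
proof -
  have "bounded_linear (\<lambda>l. (Q::real^'n^'n) ** Diag l ** transpose Q)"
  proof -
    have b1: "bounded_linear (\<lambda>b. (Q::real^'n^'n) ** b)"
      by (rule bounded_bilinear.bounded_linear_right[OF mm_bilinear])
    have b2: "bounded_linear (\<lambda>b. (b::real^'n^'n) ** transpose Q)"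
      by (rule bounded_bilinear.bounded_linear_left[OF mm_bilinear])
    have "bounded_linear (\<lambda>l. (Q::real^'n^'n) ** Diag l)"
      using bounded_linear_compose[OF b1 bl_Diag] by simp
    from bounded_linear_compose[OF b2 this] show ?thesis by (simp add: o_def)
  qed
  then show ?thesis by (rule bounded_linear_imp_has_derivative)
qed

lemma eucl_grad_eq:
  fixes g :: "'a::real_inner \<Rightarrow> real"
  assumes "(g has_derivative (\<lambda>h. G \<bullet> h)) (at y)"
  shows "eucl_grad g y = G"
  unfolding eucl_grad_def
proof (rule the_equality)
  fix G' assume "(g has_derivative (\<lambda>h. G' \<bullet> h)) (at y)"
  from has_derivative_unique[OF assms this] have "\<And>h. G \<bullet> h = G' \<bullet> h" by metis
  then have "(G - G') \<bullet> (G - G') = 0" by (simp add: inner_diff_left)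
  then show "G' = G" by simp
qed (rule assms)

definition dg :: "real^'n^'n \<Rightarrow> real^'n" where "dg M = (\<chi> i. M$i$i)"

lemma inner_Diag: "M \<bullet> Diag h = dg M \<bullet> h"
  by (simp add: inner_vec_def Diag_def dg_def if_distrib cong: if_cong)

lemma norm_dg: "norm (dg M) \<le> norm M"
proof -
  have "(norm (dg M))^2 = (\<Sum>i\<in>UNIV. (M$i$i)^2)"
    unfolding power2_norm_eq_inner by (simp add: inner_vec_def dg_def power2_eq_square)
  also have "\<dots> \<le> (\<Sum>i\<in>UNIV. \<Sum>j\<in>UNIV. (M$i$j)^2)"
  proof (rule sum_mono)
    fix i show "(M$i$i)^2 \<le> (\<Sum>j\<in>UNIV. (M$i$j)^2)"
      using member_le_sum[of i UNIV "\<lambda>j. (M$i$j)^2"] by simp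
  qed
  also have "\<dots> = (norm M)^2" by (simp add: norm_sq_mat)
  finally show ?thesis by (rule power2_le_imp_le) simp
qed

lemma dg_diff: "dg A - dg B = dg (A - B)"
  by (simp add: dg_def vec_eq_iff)

lemma g_grad:
  fixes F :: "real^'n^'n \<Rightarrow> real" and Y :: "real^'n^'n"
  assumes F_grad: "\<And>X. X \<in> sym_mats \<Longrightarrow> gradF X \<in> sym_mats \<and>
                     (F has_derivative (\<lambda>H. gradF X \<bullet> H)) (at X within sym_mats)"
  shows "((\<lambda>Y. F (Y ** Diag l ** transpose Y)) has_derivative
          (\<lambda>H. (2 *\<^sub>R (gradF (Y ** Diag l ** transpose Y) ** Y ** Diag l)) \<bullet> H)) (at Y)"
proof -
  let ?X = "Y ** Diag l ** transpose Y"
  let ?G = "gradF ?X"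
  have "((\<lambda>Y. F (Y ** Diag l ** transpose Y)) has_derivative
     (\<lambda>H. ?G \<bullet> (H ** Diag l ** transpose Y + Y ** Diag l ** transpose H))) (at Y within UNIV)"
    apply (rule has_derivative_in_compose2[where t=sym_mats and g=F and g'="\<lambda>X H. gradF X \<bullet> H"])
    apply (simp add: F_grad)
    apply (auto simp: sym_conj)[2]
    apply (rule conj_deriv)
    done
  moreover have "\<And>H. ?G \<bullet> (H ** Diag l ** transpose Y + Y ** Diag l ** transpose H)
                     = (2 *\<^sub>R (?G ** Y ** Diag l)) \<bullet> H"
  proof -
    fix H
    have Gs: "transpose ?G = ?G" using F_grad[OF sym_conj[of Y l]] unfolding sym_mats_def by blast
    have 1: "?G \<bullet> (H ** Diag l ** transpose Y) = (?G ** Y ** Diag l) \<bullet> H"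
    proof -
      have "?G \<bullet> ((H ** Diag l) ** transpose Y) = (?G ** Y) \<bullet> (H ** Diag l)"
        by (simp only: inner_mm_right transpose_transpose)
      also have "\<dots> = (?G ** Y ** Diag l) \<bullet> H"
        by (simp only: inner_mm_right transpose_Diag)
      finally show ?thesis .
    qed
    have 2: "?G \<bullet> (Y ** Diag l ** transpose H) = (?G ** Y ** Diag l) \<bullet> H"
    proof -
      have "?G \<bullet> ((Y ** Diag l) ** transpose H) = (transpose (Y ** Diag l) ** ?G) \<bullet> transpose H"
        by (simp only: inner_mm_left)
      also have "\<dots> = transpose (transpose (Y ** Diag l) ** ?G) \<bullet> H"
        by (rule inner_transpose)
      also have "\<dots> = (?G ** Y ** Diag l) \<bullet> H"
        by (simp only: matrix_transpose_mul transpose_transpose Gs matrix_mul_assoc)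
      finally show ?thesis .
    qed
    show "?G \<bullet> (H ** Diag l ** transpose Y + Y ** Diag l ** transpose H)
                     = (2 *\<^sub>R (?G ** Y ** Diag l)) \<bullet> H"
      by (simp only: inner_add_right 1 2 inner_scaleR_left)
  qed
  ultimately show ?thesis by simp
qed

lemma l_grad:
  fixes F :: "real^'n^'n \<Rightarrow> real" and Q :: "real^'n^'n"
  assumes F_grad: "\<And>X. X \<in> sym_mats \<Longrightarrow> gradF X \<in> sym_mats \<and>
                     (F has_derivative (\<lambda>H. gradF X \<bullet> H)) (at X within sym_mats)"
  shows "((\<lambda>l. F (Q ** Diag l ** transpose Q)) has_derivative
          (\<lambda>h. dg (transpose Q ** gradF (Q ** Diag l ** transpose Q) ** Q) \<bullet> h)) (at l)"
proof -
  let ?X = "Q ** Diag l ** transpose Q"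
  let ?G = "gradF ?X"
  have "((\<lambda>l. F (Q ** Diag l ** transpose Q)) has_derivative
     (\<lambda>h. ?G \<bullet> (Q ** Diag h ** transpose Q))) (at l within UNIV)"
    apply (rule has_derivative_in_compose2[where t=sym_mats and g=F and g'="\<lambda>X H. gradF X \<bullet> H"])
    apply (simp add: F_grad)
    apply (auto simp: sym_conj)[2]
    apply (rule Diag_conj_deriv)
    done
  moreover have "\<And>h. ?G \<bullet> (Q ** Diag h ** transpose Q) = dg (transpose Q ** ?G ** Q) \<bullet> h"
  proof -
    fix h
    have "?G \<bullet> ((Q ** Diag h) ** transpose Q) = (?G ** Q) \<bullet> (Q ** Diag h)"
      by (simp only: inner_mm_right transpose_transpose)
    also have "\<dots> = (transpose Q ** ?G ** Q) \<bullet> Diag h"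
      by (simp only: inner_mm_left matrix_mul_assoc)
    also have "\<dots> = dg (transpose Q ** ?G ** Q) \<bullet> h" by (rule inner_Diag)
    finally show "?G \<bullet> (Q ** Diag h ** transpose Q) = dg (transpose Q ** ?G ** Q) \<bullet> h" .
  qed
  ultimately show ?thesis by simp
qed

lemma tangent_subspace: "subspace (tangent_orth (Q::real^'n^'n))"
proof -
  define T where "T = (\<lambda>V::real^'n^'n. transpose Q ** V + transpose V ** Q)"
  have L: "linear T" unfolding T_def
    by (rule linearI)
       (simp_all add: matrix_matrix_mult_def transpose_def vec_eq_iff sum.distrib algebra_simps sum_distrib_left)
  have "tangent_orth Q = {V. T V = 0}" by (simp add: tangent_orth_def T_def)
  moreover have "subspace {V. T V = 0}"
    unfolding subspace_def using linear_0[OF L] linear_add[OF L] linear_scale[OF L] by simp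
  ultimately show ?thesis by simp
qed

lemma proj_tangent_inner:
  assumes V: "V \<in> tangent_orth Q"
  shows "proj_tangent Q G \<bullet> V = G \<bullet> V"
proof -
  let ?T = "tangent_orth Q"
  have sub: "subspace ?T" by (rule tangent_subspace)
  then have sp: "span ?T = ?T" by (simp add: span_eq_iff)
  obtain y z where y: "y \<in> span ?T" and z: "\<And>w. w \<in> span ?T \<Longrightarrow> orthogonal z w" and G: "G = y + z"
    using orthogonal_subspace_decomp_exists[of ?T G] by metis
  have yT: "y \<in> ?T" using y sp by simp
  have yorth: "\<forall>W\<in>?T. (G - y) \<bullet> W = 0" using z sp G by (simp add: orthogonal_def)
  have "proj_tangent Q G = y"
    unfolding proj_tangent_def
  proof (rule the_equality)
    show "y \<in> ?T \<and> (\<forall>V\<in>?T. (G - y) \<bullet> V = 0)" using yT yorth by simp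
  next
    fix P assume P: "P \<in> ?T \<and> (\<forall>V\<in>?T. (G - P) \<bullet> V = 0)"
    have d: "P - y \<in> ?T" using P yT sub by (simp add: subspace_diff)
    have "(G - P) \<bullet> (P - y) = 0" using P d by blast
    moreover have "(G - y) \<bullet> (P - y) = 0" using yorth d by blast
    ultimately have "(P - y) \<bullet> (P - y) = 0"
      by (simp add: inner_diff_left inner_diff_right inner_commute)
    then show "P = y" by simp
  qed
  then show ?thesis using yorth V by (simp add: inner_diff_left)
qed

lemma riem_grad_inner:
  "V \<in> tangent_orth Q \<Longrightarrow> riem_grad g Q \<bullet> V = eucl_grad g Q \<bullet> V"
  unfolding riem_grad_def by (rule proj_tangent_inner)

lemma norm_mat1: "norm (mat 1 :: real^'n^'n) = sqrt (real CARD('n))"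
  by (rule orth_norm[OF orthogonal_matrix_id])

lemma matpow_norm: "norm (matpow (A::real^'n^'n) k) \<le> sqrt (real CARD('n)) * norm A ^ k"
proof (induction k)
  case 0 then show ?case by (simp add: norm_mat1)
next
  case (Suc k)
  have "norm (matpow A (Suc k)) \<le> norm A * norm (matpow A k)" by (simp add: frob_mult)
  also have "\<dots> \<le> norm A * (sqrt (real CARD('n)) * norm A ^ k)"
    by (rule mult_left_mono[OF Suc.IH]) simp
  finally show ?case by (simp add: algebra_simps)
qed

lemma matpow_comm: "matpow A k ** A = A ** matpow A k"
  by (induction k) (simp_all add: matrix_mul_assoc[symmetric])

lemma matpow_add: "matpow A (i + j) = matpow A i ** matpow A j"
  by (induction i) (simp_all add: matrix_mul_assoc)

lemma matpow_transpose: "transpose (matpow A k) = matpow (transpose A) k"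
  by (induction k) (simp_all add: matrix_transpose_mul matpow_comm)

lemma matpow_neg: "matpow (- (A::real^'n^'n)) k = (-1)^k *\<^sub>R matpow A k"
proof (induction k)
  case 0 then show ?case by simp
next
  case (Suc k)
  have "matpow (-A) (Suc k) = (-A) ** ((-1)^k *\<^sub>R matpow A k)" by (simp add: Suc.IH)
  also have "\<dots> = (-1)^(Suc k) *\<^sub>R (A ** matpow A k)"
    by (simp add: bounded_bilinear.minus_left[OF mm_bilinear] bounded_bilinear.scaleR_right[OF mm_bilinear])
  finally show ?case by simp
qed

definition mterm :: "real^'n^'n \<Rightarrow> nat \<Rightarrow> real^'n^'n" where
  "mterm A k = (1 / fact k) *\<^sub>R matpow A k"

lemma mterm_norm: "norm (mterm (A::real^'n^'n) k) \<le> sqrt (real CARD('n)) * (norm A ^ k /\<^sub>R fact k)"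
proof -
  have "norm (mterm A k) = norm (matpow A k) / fact k" by (simp add: mterm_def)
  also have "\<dots> \<le> sqrt (real CARD('n)) * norm A ^ k / fact k"
    by (rule divide_right_mono[OF matpow_norm]) simp
  finally show ?thesis by (simp add: field_simps)
qed

lemma mterm_summable_norm: "summable (\<lambda>k. norm (mterm (A::real^'n^'n) k))"
proof (rule summable_comparison_test')
  show "summable (\<lambda>k. sqrt (real CARD('n)) * (norm A ^ k /\<^sub>R fact k))"
    by (rule summable_mult, rule sums_summable[OF exp_converges])
  show "\<And>k. 0 \<le> k \<Longrightarrow> norm (norm (mterm A k)) \<le> sqrt (real CARD('n)) * (norm A ^ k /\<^sub>R fact k)"
    using mterm_norm by simp
qed

lemma mterm_summable: "summable (mterm (A::real^'n^'n))"
  by (rule summable_norm_cancel[OF mterm_summable_norm])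

lemma mexp_sums: "mterm (A::real^'n^'n) sums mexp A"
proof -
  have "mexp A = suminf (mterm A)" by (simp add: mexp_def mterm_def[abs_def])
  then show ?thesis using summable_sums[OF mterm_summable] by simp
qed

lemma (in bounded_bilinear) Cauchy_product_sums_bb:
  fixes a :: "nat \<Rightarrow> 'a" and b :: "nat \<Rightarrow> 'b"
  assumes a: "summable (\<lambda>k. norm (a k))"
    and b: "summable (\<lambda>k. norm (b k))"
    and sa: "summable a" and sb: "summable b"
  shows "(\<lambda>k. \<Sum>i\<le>k. prod (a i) (b (k - i))) sums (prod (\<Sum>k. a k) (\<Sum>k. b k))"
proof -
  obtain K where K: "\<And>x y. norm (prod x y) \<le> norm x * norm y * K" "K > 0"
    using pos_bounded by blast
  let ?S1 = "\<lambda>n::nat. {..<n} \<times> {..<n}"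
  let ?S2 = "\<lambda>n::nat. {(i,j). i + j < n}"
  have S1_mono: "\<And>m n. m \<le> n \<Longrightarrow> ?S1 m \<subseteq> ?S1 n" by auto
  have S2_le_S1: "\<And>n. ?S2 n \<subseteq> ?S1 n" by auto
  have S1_le_S2: "\<And>n. ?S1 (n div 2) \<subseteq> ?S2 n" by auto
  have finite_S1: "\<And>n. finite (?S1 n)" by simp
  with S2_le_S1 have finite_S2: "\<And>n. finite (?S2 n)" by (rule finite_subset)
  let ?g = "\<lambda>(i,j). prod (a i) (b j)"
  let ?f = "\<lambda>(i,j). norm (a i) * norm (b j)"
  have f_nonneg: "\<And>x. 0 \<le> ?f x" by auto
  then have norm_sum_f: "\<And>A. norm (sum ?f A) = sum ?f A"
    unfolding real_norm_def
    by (simp only: abs_of_nonneg sum_nonneg [rule_format])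
  have "(\<lambda>n. prod (\<Sum>k<n. a k) (\<Sum>k<n. b k)) \<longlonglongrightarrow> prod (\<Sum>k. a k) (\<Sum>k. b k)"
    by (intro tendsto summable_LIMSEQ sa sb)
  moreover have "\<And>n. prod (\<Sum>k<n. a k) (\<Sum>k<n. b k) = sum ?g (?S1 n)"
  proof -
    fix n
    have "prod (\<Sum>k<n. a k) (\<Sum>k<n. b k) = (\<Sum>i<n. prod (a i) (\<Sum>k<n. b k))"
      by (rule sum_left)
    also have "\<dots> = (\<Sum>i<n. \<Sum>j<n. prod (a i) (b j))"
      by (simp add: sum_right)
    also have "\<dots> = sum ?g (?S1 n)" by (rule sum.cartesian_product)
    finally show "prod (\<Sum>k<n. a k) (\<Sum>k<n. b k) = sum ?g (?S1 n)" .
  qed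
  ultimately have 1: "(\<lambda>n. sum ?g (?S1 n)) \<longlonglongrightarrow> prod (\<Sum>k. a k) (\<Sum>k. b k)"
    by simp
  have "(\<lambda>n. (\<Sum>k<n. norm (a k)) * (\<Sum>k<n. norm (b k))) \<longlonglongrightarrow> (\<Sum>k. norm (a k)) * (\<Sum>k. norm (b k))"
    using a b by (intro tendsto_mult summable_LIMSEQ)
  then have "(\<lambda>n. sum ?f (?S1 n)) \<longlonglongrightarrow> (\<Sum>k. norm (a k)) * (\<Sum>k. norm (b k))"
    by (simp only: sum_product sum.Sigma [rule_format] finite_lessThan)
  then have "convergent (\<lambda>n. sum ?f (?S1 n))"
    by (rule convergentI)
  then have Cauchy: "Cauchy (\<lambda>n. sum ?f (?S1 n))"
    by (rule convergent_Cauchy)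
  have "Zfun (\<lambda>n. sum ?f (?S1 n - ?S2 n)) sequentially"
  proof (rule ZfunI, simp only: eventually_sequentially norm_sum_f)
    fix r :: real
    assume r: "0 < r"
    from CauchyD [OF Cauchy r] obtain N
      where "\<forall>m\<ge>N. \<forall>n\<ge>N. norm (sum ?f (?S1 m) - sum ?f (?S1 n)) < r" ..
    then have "\<And>m n. N \<le> n \<Longrightarrow> n \<le> m \<Longrightarrow> norm (sum ?f (?S1 m - ?S1 n)) < r"
      by (simp only: sum_diff finite_S1 S1_mono)
    then have N: "\<And>m n. N \<le> n \<Longrightarrow> n \<le> m \<Longrightarrow> sum ?f (?S1 m - ?S1 n) < r"
      by (simp only: norm_sum_f)
    show "\<exists>N. \<forall>n\<ge>N. sum ?f (?S1 n - ?S2 n) < r"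
    proof (intro exI allI impI)
      fix n
      assume "2 * N \<le> n"
      then have n: "N \<le> n div 2" by simp
      have "sum ?f (?S1 n - ?S2 n) \<le> sum ?f (?S1 n - ?S1 (n div 2))"
        by (intro sum_mono2 finite_Diff finite_S1 f_nonneg Diff_mono subset_refl S1_le_S2)
      also have "\<dots> < r"
        using n div_le_dividend by (rule N)
      finally show "sum ?f (?S1 n - ?S2 n) < r" .
    qed
  qed
  then have Zf: "Zfun (\<lambda>n. sum ?f (?S1 n - ?S2 n) * K) sequentially"
    by (rule Zfun_mult_left)
  have "Zfun (\<lambda>n. sum ?g (?S1 n - ?S2 n)) sequentially"
  proof (rule Zfun_le[OF Zf], rule allI)
    fix n
    let ?A = "?S1 n - ?S2 n"
    have "norm (sum ?g ?A) \<le> sum (\<lambda>x. norm (?g x)) ?A" by (rule norm_sum)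
    also have "\<dots> \<le> sum (\<lambda>x. ?f x * K) ?A"
      by (rule sum_mono) (auto simp: K(1))
    also have "\<dots> = sum ?f ?A * K" by (simp add: sum_distrib_right)
    also have "\<dots> = norm (sum ?f ?A * K)"
    proof -
      have "0 \<le> sum ?f ?A" by (rule sum_nonneg) (auto)
      then show ?thesis using K(2) by simp
    qed
    finally show "norm (sum ?g ?A) \<le> norm (sum ?f ?A * K)" .
  qed
  then have 2: "(\<lambda>n. sum ?g (?S1 n) - sum ?g (?S2 n)) \<longlonglongrightarrow> 0"
    unfolding tendsto_Zfun_iff diff_0_right
    by (simp only: sum_diff finite_S1 S2_le_S1)
  with 1 have "(\<lambda>n. sum ?g (?S2 n)) \<longlonglongrightarrow> prod (\<Sum>k. a k) (\<Sum>k. b k)"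
    by (rule Lim_transform2)
  then show ?thesis
    by (simp only: sums_def sum.triangle_reindex)
qed

lemma mexp_neg_mult: "mexp (- (A::real^'n^'n)) ** mexp A = mat 1"
proof -
  have "(\<lambda>k. \<Sum>i\<le>k. mterm (-A) i ** mterm A (k - i)) sums (suminf (mterm (-A)) ** suminf (mterm A))"
    by (rule bounded_bilinear.Cauchy_product_sums_bb[OF mm_bilinear mterm_summable_norm mterm_summable_norm
          mterm_summable mterm_summable])
  then have S: "(\<lambda>k. \<Sum>i\<le>k. mterm (-A) i ** mterm A (k - i)) sums (mexp (-A) ** mexp A)"
    using sums_unique[OF mexp_sums[of A]] sums_unique[OF mexp_sums[of "-A"]] by simp
  have T: "(\<Sum>i\<le>k. mterm (-A) i ** mterm A (k - i)) = (if k = 0 then mat 1 else 0)" for k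
  proof -
    have "mterm (-A) i ** mterm A (k - i) = ((-1)^i * (1 / (fact i * fact (k - i)))) *\<^sub>R matpow A k"
      if "i \<le> k" for i
    proof -
      have "mterm (-A) i ** mterm A (k - i)
            = ((-1)^i * (1 / (fact i * fact (k - i)))) *\<^sub>R (matpow A i ** matpow A (k - i))"
        by (simp add: mterm_def matpow_neg bounded_bilinear.scaleR_left[OF mm_bilinear]
              bounded_bilinear.scaleR_right[OF mm_bilinear])
      also have "matpow A i ** matpow A (k - i) = matpow A k"
        using that by (simp add: matpow_add[symmetric])
      finally show ?thesis .
    qed
    then have "(\<Sum>i\<le>k. mterm (-A) i ** mterm A (k - i))
          = (\<Sum>i\<le>k. ((-1)^i * (1 / (fact i * fact (k - i)))) *\<^sub>R matpow A k)"
      by (intro sum.cong) auto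
    also have "\<dots> = (\<Sum>i\<le>k. ((-1)^i * (1 / (fact i * fact (k - i))))) *\<^sub>R matpow A k"
      by (simp add: scaleR_sum_left)
    also have "(\<Sum>i\<le>k. ((-1)^i * (1 / (fact i * fact (k - i)))) :: real)
             = (\<Sum>i\<le>k. (-1)^i * of_nat (k choose i)) / fact k"
    proof -
      have "(-1)^i * (1 / (fact i * fact (k - i))) = (-1)^i * of_nat (k choose i) / (fact k :: real)"
        if "i \<le> k" for i
        using that by (simp add: binomial_fact)
      then show ?thesis by (simp add: sum_divide_distrib)
    qed
    finally show ?thesis
      by (cases "k = 0") (simp_all add: choose_alternating_sum)
  qed
  have "(\<lambda>k. if k = 0 then mat 1 else (0::real^'n^'n)) sums mat 1"
    using sums_single[of 0 "\<lambda>_. mat 1 :: real^'n^'n"] by simp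
  moreover have "(\<lambda>k. if k = 0 then mat 1 else (0::real^'n^'n)) sums (mexp (-A) ** mexp A)"
    using S T by simp
  ultimately show ?thesis by (rule sums_unique2[symmetric])
qed

lemma mexp_transpose: "transpose (mexp (A::real^'n^'n)) = mexp (transpose A)"
proof -
  have "(\<lambda>k. transpose (mterm A k)) sums transpose (mexp A)"
    by (rule bounded_linear.sums[OF bl_transpose mexp_sums])
  moreover have "(\<lambda>k. transpose (mterm A k)) = mterm (transpose A)"
    by (simp add: fun_eq_iff mterm_def transpose_scalar matpow_transpose)
  ultimately show ?thesis using mexp_sums[of "transpose A"] by (simp add: sums_unique2)
qed

lemma mexp_orth:
  assumes "transpose A = - (A::real^'n^'n)"
  shows "orthogonal_matrix (mexp A)"
  unfolding orthogonal_matrix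
  by (simp add: mexp_transpose assms mexp_neg_mult)

lemma mexp_rem:
  "norm (mexp (A::real^'n^'n) - mat 1 - A) \<le> sqrt (real CARD('n)) * (norm A)^2 * exp (norm A)"
proof -
  let ?c = "sqrt (real CARD('n))"
  have "(\<lambda>i. mterm A (i + 2)) sums (mexp A - (\<Sum>i<2. mterm A i))"
    by (rule sums_split_initial_segment[OF mexp_sums])
  moreover have "(\<Sum>i<2. mterm A i) = mat 1 + A"
    by (simp add: mterm_def numeral_2_eq_2)
  ultimately have S: "(\<lambda>i. mterm A (i + 2)) sums (mexp A - mat 1 - A)" by (simp add: diff_diff_eq)
  have sn: "summable (\<lambda>i. norm (mterm A (i + 2)))"
    by (rule summable_ignore_initial_segment[OF mterm_summable_norm])
  have bnd: "norm (mterm A (i + 2)) \<le> ?c * (norm A)^2 * (norm A ^ i /\<^sub>R fact i)" for i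
  proof -
    have "norm (mterm A (i + 2)) \<le> ?c * (norm A ^ (i + 2) /\<^sub>R fact (i + 2))" by (rule mterm_norm)
    also have "\<dots> \<le> ?c * (norm A ^ (i + 2) /\<^sub>R fact i)"
    proof -
      have "fact i \<le> (fact (i + 2) :: real)" by (rule fact_mono) simp
      then have "norm A ^ (i + 2) / fact (i + 2) \<le> norm A ^ (i + 2) / (fact i :: real)"
        by (intro divide_left_mono) auto
      then show ?thesis by (intro mult_left_mono) (auto simp: divide_inverse_commute)
    qed
    also have "\<dots> = ?c * (norm A)^2 * (norm A ^ i /\<^sub>R fact i)"
      by (simp add: power_add power2_eq_square field_simps)
    finally show ?thesis .
  qed
  have se: "(\<lambda>i. ?c * (norm A)^2 * (norm A ^ i /\<^sub>R fact i)) sums (?c * (norm A)^2 * exp (norm A))"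
    by (rule sums_mult[OF exp_converges])
  have "mexp A - mat 1 - A = (\<Sum>i. mterm A (i + 2))" by (rule sums_unique[OF S])
  then have "norm (mexp A - mat 1 - A) = norm (\<Sum>i. mterm A (i + 2))" by (rule arg_cong)
  also have "\<dots> \<le> (\<Sum>i. norm (mterm A (i + 2)))" by (rule summable_norm[OF sn])
  also have "\<dots> \<le> (\<Sum>i. ?c * (norm A)^2 * (norm A ^ i /\<^sub>R fact i))"
    by (rule suminf_le[OF bnd sn sums_summable[OF se]])
  also have "\<dots> = ?c * (norm A)^2 * exp (norm A)" using sums_unique[OF se] by (rule sym)
  finally show ?thesis .
qed

lemma orth_groupD: "Q \<in> orth_group \<Longrightarrow> transpose Q ** Q = mat 1 \<and> Q ** transpose Q = mat 1"
  by (simp add: orth_group_def orthogonal_matrix_def)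

lemma tangent_skew: "V \<in> tangent_orth Q \<Longrightarrow> transpose (transpose Q ** V) = - (transpose Q ** V)"
  by (simp add: tangent_orth_def matrix_transpose_mul eq_neg_iff_add_eq_0 add.commute)

lemma exp_orth_orth:
  assumes Q: "Q \<in> orth_group" and V: "V \<in> tangent_orth Q"
  shows "exp_orth Q V \<in> orth_group"
  using Q mexp_orth[OF tangent_skew[OF V]]
  by (simp add: exp_orth_def orth_group_def orthogonal_matrix_mul)

lemma orth_group_norm: "Q \<in> orth_group \<Longrightarrow> norm (Q::real^'n^'n) = sqrt (real CARD('n))"
  by (simp add: orth_group_def orth_norm)

lemma large_V_bound:
  fixes Q Y V :: "real^'n^'n"
  assumes "norm Q \<le> c" "norm Y \<le> c" "1 \<le> norm V"
  shows "norm (Y - Q - V) \<le> (2 * c + 1) * (norm V)^2"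
proof -
  have "norm (Y - Q - V) \<le> norm Y + norm Q + norm V" by (rule order_trans[OF norm_triangle_ineq4]) (simp add: norm_triangle_ineq4)
  also have "\<dots> \<le> 2 * c + norm V" using assms by simp
  also have "\<dots> \<le> (2 * c + 1) * (norm V)^2"
  proof -
    have "norm V \<le> (norm V)^2" using assms(3) mult_left_mono[of 1 "norm V" "norm V"] by (simp add: power2_eq_square)
    moreover have "1 \<le> (norm V)^2" using assms(3) by (simp add: one_le_power)
    moreover have "0 \<le> c" using assms(1) norm_ge_zero order_trans by blast
    ultimately have "2 * c * 1 \<le> 2 * c * (norm V)^2" "norm V \<le> (norm V)^2"
      by (metis mult_left_mono zero_le_numeral mult_nonneg_nonneg, simp)
    then show ?thesis unfolding distrib_right by linarith
  qed
  finally show ?thesis .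
qed

lemma exp_orth_rem:
  "\<exists>\<alpha>. \<forall>Q\<in>orth_group. \<forall>V\<in>tangent_orth Q.
      norm (exp_orth Q V - Q - V) \<le> \<alpha> * (norm (V::real^'n^'n))^2"
proof -
  let ?c = "sqrt (real CARD('n))"
  have c0: "0 \<le> ?c" by simp
  show ?thesis
  proof (intro exI[of _ "?c * ?c * ?c^2 * exp ?c + (2 * ?c + 1)"] ballI)
    fix Q V :: "real^'n^'n" assume Q: "Q \<in> orth_group" and V: "V \<in> tangent_orth Q"
    let ?A = "transpose Q ** V"
    have nQ: "norm Q = ?c" using orth_group_norm[OF Q] .
    have QA: "Q ** ?A = V" using orth_groupD[OF Q] by (simp add: matrix_mul_assoc)
    have eq: "exp_orth Q V - Q - V = Q ** (mexp ?A - mat 1 - ?A)"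
      by (simp add: exp_orth_def QA bounded_bilinear.diff_right[OF mm_bilinear])
    have rest_nonneg: "0 \<le> ?c * ?c * ?c^2 * exp ?c" by simp
    show "norm (exp_orth Q V - Q - V) \<le> (?c * ?c * ?c^2 * exp ?c + (2 * ?c + 1)) * (norm V)^2"
    proof (cases "norm V \<le> 1")
      case True
      have nA: "norm ?A \<le> ?c * norm V" using frob_mult[of "transpose Q" V] by (simp add: norm_transpose nQ)
      have nA1: "norm ?A \<le> ?c" using nA True c0 by (smt (verit) mult_left_le)
      have "norm (exp_orth Q V - Q - V) \<le> norm Q * norm (mexp ?A - mat 1 - ?A)"
        unfolding eq by (rule frob_mult)
      also have "\<dots> \<le> ?c * (?c * (norm ?A)^2 * exp (norm ?A))"
        unfolding nQ by (rule mult_left_mono[OF mexp_rem c0])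
      also have "\<dots> \<le> ?c * (?c * (?c * norm V)^2 * exp ?c)"
        using nA nA1 c0 by (intro mult_left_mono mult_mono power_mono) auto
      also have "\<dots> = (?c * ?c * ?c^2 * exp ?c) * (norm V)^2"
        by (simp add: power_mult_distrib)
      also have "\<dots> \<le> (?c * ?c * ?c^2 * exp ?c + (2 * ?c + 1)) * (norm V)^2"
        by (intro mult_right_mono) auto
      finally show ?thesis .
    next
      case False
      have "norm (exp_orth Q V - Q - V) \<le> (2 * ?c + 1) * (norm V)^2"
        by (rule large_V_bound) (use False nQ orth_group_norm[OF exp_orth_orth[OF Q V]] in auto)
      also have "\<dots> \<le> (?c * ?c * ?c^2 * exp ?c + (2 * ?c + 1)) * (norm V)^2"
        by (intro mult_right_mono) auto
      finally show ?thesis .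
    qed
  qed
qed

lemma lin_bound:
  fixes L :: "'a::euclidean_space \<Rightarrow> 'b::real_normed_vector"
  assumes "linear L"
  shows "norm (L v) \<le> norm v * (\<Sum>b\<in>Basis. norm (L b))"
proof -
  have "L v = L (\<Sum>b\<in>Basis. (v \<bullet> b) *\<^sub>R b)" by (simp add: euclidean_representation)
  also have "\<dots> = (\<Sum>b\<in>Basis. (v \<bullet> b) *\<^sub>R L b)"
    by (simp add: linear_sum[OF assms] linear_scale[OF assms])
  finally have "norm (L v) = norm (\<Sum>b\<in>Basis. (v \<bullet> b) *\<^sub>R L b)" by simp
  also have "\<dots> \<le> (\<Sum>b\<in>Basis. norm ((v \<bullet> b) *\<^sub>R L b))"
    by (rule norm_sum)
  also have "\<dots> \<le> (\<Sum>b\<in>Basis. norm v * norm (L b))"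
    by (intro sum_mono) (simp add: Basis_le_norm mult_right_mono)
  finally show ?thesis by (simp add: sum_distrib_left)
qed

lemma compact_K:
  "compact {p \<in> (tangent_bundle_orth :: ((real^'n^'n) \<times> (real^'n^'n)) set). norm (snd p) \<le> 1}"
proof -
  let ?c = "sqrt (real CARD('n))"
  let ?K = "{p \<in> (tangent_bundle_orth :: ((real^'n^'n) \<times> (real^'n^'n)) set). norm (snd p) \<le> 1}"
  have eq: "?K = {p. transpose (fst p) ** fst p = mat 1} \<inter>
      {p. transpose (fst p) ** snd p + transpose (snd p) ** fst p = 0} \<inter> {p. norm (snd p) \<le> 1}"
    by (auto simp: tangent_bundle_orth_def orth_group_def orthogonal_matrix tangent_orth_def)
  have t1: "continuous_on UNIV (\<lambda>p::(real^'n^'n) \<times> (real^'n^'n). transpose (fst p))"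
    by (rule linear_continuous_on, rule bounded_linear_compose[OF bl_transpose bounded_linear_fst])
  have t2: "continuous_on UNIV (\<lambda>p::(real^'n^'n) \<times> (real^'n^'n). transpose (snd p))"
    by (rule linear_continuous_on, rule bounded_linear_compose[OF bl_transpose bounded_linear_snd])
  have c1: "continuous_on UNIV (\<lambda>p::(real^'n^'n) \<times> (real^'n^'n). transpose (fst p) ** fst p)"
    by (rule bounded_bilinear.continuous_on[OF mm_bilinear t1 continuous_on_fst[OF continuous_on_id]])
  have c2: "continuous_on UNIV (\<lambda>p::(real^'n^'n) \<times> (real^'n^'n). transpose (fst p) ** snd p + transpose (snd p) ** fst p)"
    by (intro continuous_on_add bounded_bilinear.continuous_on[OF mm_bilinear] t1 t2
          continuous_on_fst continuous_on_snd continuous_on_id)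
  have cl: "closed ?K"
    unfolding eq
    by (intro closed_Inter closed_Int closed_Collect_eq closed_Collect_le c1 c2 continuous_on_const
          continuous_on_norm continuous_on_snd continuous_on_id)
  have "?K \<subseteq> cball 0 (?c + 1)"
  proof
    fix p assume p: "p \<in> ?K"
    then have "fst p \<in> orth_group" by (auto simp: tangent_bundle_orth_def)
    then have "norm (fst p) = ?c" by (rule orth_group_norm)
    moreover have "norm (fst p, snd p) \<le> norm (fst p) + norm (snd p)" by (rule norm_Pair_le)
    ultimately show "p \<in> cball 0 (?c + 1)" using p by simp
  qed
  then have "bounded ?K" using bounded_cball bounded_subset by blast
  with cl show ?thesis by (simp add: compact_eq_bounded_closed)
qed




lemma transpose_zero': "transpose (0::real^'m^'n) = 0"
  by (simp add: transpose_def vec_eq_iff)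

lemma retr_rem:
  fixes R :: "real^'n^'n \<Rightarrow> real^'n^'n \<Rightarrow> real^'n^'n"
  assumes retr: "is_retraction R"
  shows "\<exists>\<alpha>. \<forall>Q\<in>orth_group. \<forall>V\<in>tangent_orth Q. norm (R Q V - Q - V) \<le> \<alpha> * (norm V)^2"
proof -
  let ?c = "sqrt (real CARD('n))"
  let ?TB = "tangent_bundle_orth :: ((real^'n^'n) \<times> (real^'n^'n)) set"
  have Rorth: "\<And>Q V. Q \<in> orth_group \<Longrightarrow> V \<in> tangent_orth Q \<Longrightarrow> R Q V \<in> orth_group"
    using retr unfolding is_retraction_def tangent_bundle_orth_def by auto
  have smooth: "smooth_on_set ?TB (\<lambda>p. R (fst p) (snd p))"
    using retr unfolding is_retraction_def by auto
  have R0: "\<And>Q. Q \<in> orth_group \<Longrightarrow> R Q 0 = Q"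
    using retr unfolding is_retraction_def by auto
  have Rd: "\<And>Q. Q \<in> orth_group \<Longrightarrow> ((\<lambda>V. R Q V) has_derivative id) (at 0 within tangent_orth Q)"
    using retr unfolding is_retraction_def by auto
  obtain U h where U: "open U" "?TB \<subseteq> U" and hR: "\<And>p. p \<in> ?TB \<Longrightarrow> h p = R (fst p) (snd p)"
    and hC: "\<And>k. Ck_on k h U"
    using smooth unfolding smooth_on_set_def by blast
  from hC[of "Suc (Suc 0)"] obtain f' where D1: "\<And>x. x \<in> U \<Longrightarrow> (h has_derivative f' x) (at x)"
     and C1: "\<And>v. Ck_on (Suc 0) (\<lambda>x. f' x v) U" by auto
  have "\<forall>v. \<exists>f2. (\<forall>x\<in>U. ((\<lambda>x. f' x v) has_derivative f2 x) (at x)) \<and> (\<forall>w. continuous_on U (\<lambda>x. f2 x w))"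
    using C1 by simp
  from choice[OF this] obtain f2 where f2: "\<forall>v. (\<forall>x\<in>U. ((\<lambda>x. f' x v) has_derivative f2 v x) (at x)) \<and> (\<forall>w. continuous_on U (\<lambda>x. f2 v x w))"
    by blast
  have D2: "\<And>v x. x \<in> U \<Longrightarrow> ((\<lambda>x. f' x v) has_derivative f2 v x) (at x)" using f2 by blast
  have C2: "\<And>v w. continuous_on U (\<lambda>x. f2 v x w)" using f2 by blast
  define K where "K = {p \<in> ?TB. norm (snd p) \<le> 1}"
  have KU: "K \<subseteq> U" using U by (auto simp: K_def)
  have cK: "compact K" unfolding K_def by (rule compact_K)
  have exM: "\<exists>m. \<forall>x\<in>K. norm (f2 b x b') \<le> m" for b b'
  proof -
    have "compact ((\<lambda>x. f2 b x b') ` K)"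
      by (rule compact_continuous_image[OF continuous_on_subset[OF C2 KU] cK])
    then have "bounded ((\<lambda>x. f2 b x b') ` K)" by (rule compact_imp_bounded)
    then show ?thesis unfolding bounded_iff by auto
  qed
  define M where "M b b' = (SOME m. \<forall>x\<in>K. norm (f2 b x b') \<le> m)" for b b'
  have M: "\<And>b b' x. x \<in> K \<Longrightarrow> norm (f2 b x b') \<le> M b b'"
    unfolding M_def using someI_ex[OF exM] by blast
  have K1: "(mat 1, 0) \<in> K"
    by (simp add: K_def tangent_bundle_orth_def orth_group_def orthogonal_matrix_id tangent_orth_def transpose_zero')
  have M0: "0 \<le> M b b'" for b b' using M[OF K1, of b b'] norm_ge_zero order_trans by blast
  define Mb where "Mb b = (\<Sum>b'\<in>Basis. M b b')" for b
  define Mt where "Mt = (\<Sum>b\<in>Basis. Mb b)"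
  have Mb0: "0 \<le> Mb b" for b unfolding Mb_def by (rule sum_nonneg) (simp add: M0)
  have Mt0: "0 \<le> Mt" unfolding Mt_def by (rule sum_nonneg) (simp add: Mb0)
  have small: "norm (R Q V - Q - V) \<le> Mt * (norm V)^2"
    if Q: "Q \<in> orth_group" and V: "V \<in> tangent_orth Q" and V1: "norm V \<le> 1" for Q V
  proof -
    define p where "p t = (Q, t *\<^sub>R V)" for t :: real
    have nP: "norm (0::real^'n^'n, V) = norm V" by (simp add: norm_Pair)
    have pTB: "p t \<in> ?TB" for t
      using Q V tangent_subspace[of Q] by (simp add: p_def tangent_bundle_orth_def subspace_scale)
    have pK: "p t \<in> K" if "t \<in> {0..1}" for t
    proof -
      have "norm (t *\<^sub>R V) \<le> 1" using that V1 by (simp add: mult_le_one)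
      then show ?thesis using pTB[of t] by (simp add: K_def p_def)
    qed
    have pU: "p t \<in> U" for t using pTB U by blast
    have dp: "(p has_derivative (\<lambda>s. (0, s *\<^sub>R V))) (at t within S)" for t S
      unfolding p_def by (auto intro!: derivative_eq_intros)
    have f'0: "f' (p 0) (0, V) = V"
    proof -
      have d1: "((\<lambda>s. h (p s)) has_derivative (\<lambda>s. f' (p 0) (0, s *\<^sub>R V))) (at 0)"
        by (rule has_derivative_compose[OF dp D1[OF pU]])
      have d2: "((\<lambda>s. R Q (s *\<^sub>R V)) has_derivative (\<lambda>s. s *\<^sub>R V)) (at 0)"
      proof -
        have a: "((\<lambda>s::real. s *\<^sub>R V) has_derivative (\<lambda>s. s *\<^sub>R V)) (at 0)"
          by (rule bounded_linear_imp_has_derivative, rule bounded_linear_scaleR_left)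
        have sub: "(\<lambda>s::real. s *\<^sub>R V) ` UNIV \<subseteq> tangent_orth Q"
          using V tangent_subspace[of Q] by (auto simp: subspace_scale)
        have b: "((\<lambda>W. R Q W) has_derivative id) (at ((\<lambda>s::real. s *\<^sub>R V) 0) within (\<lambda>s::real. s *\<^sub>R V) ` UNIV)"
          using has_derivative_subset[OF Rd[OF Q] sub] by simp
        from diff_chain_within[OF a b] show ?thesis by (simp add: o_def)
      qed
      have eqf: "(\<lambda>s. h (p s)) = (\<lambda>s. R Q (s *\<^sub>R V))"
        using hR pTB by (simp add: p_def fun_eq_iff)
      have "(\<lambda>s. f' (p 0) (0, s *\<^sub>R V)) = (\<lambda>s. s *\<^sub>R V)"
        using has_derivative_unique[OF d1[unfolded eqf] d2] .
      from fun_cong[OF this, of 1] show ?thesis by simp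
    qed
    have st2: "norm (f' (p t) b - f' (p 0) b) \<le> norm V * Mb b * t" if t: "t \<in> {0..1}" for t b
    proof -
      have der: "((\<lambda>r. f' (p r) b) has_derivative (\<lambda>\<rho>. f2 b (p r) (0, \<rho> *\<^sub>R V))) (at r within {0..1})" for r
        by (rule has_derivative_compose[OF dp D2[OF pU]])
      have bd: "onorm (\<lambda>\<rho>. f2 b (p r) (0, \<rho> *\<^sub>R V)) \<le> norm V * Mb b" if r: "r \<in> {0..1}" for r
      proof -
        have lin: "linear (f2 b (p r))" using D2[OF pU] by (rule has_derivative_linear)
        have "(\<lambda>\<rho>. f2 b (p r) (0, \<rho> *\<^sub>R V)) = (\<lambda>\<rho>. \<rho> *\<^sub>R f2 b (p r) (0, V))"
        proof
          fix \<rho> :: real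
          have "(0::real^'n^'n, \<rho> *\<^sub>R V) = \<rho> *\<^sub>R (0, V)" by simp
          then show "f2 b (p r) (0, \<rho> *\<^sub>R V) = \<rho> *\<^sub>R f2 b (p r) (0, V)"
            using linear_scale[OF lin, of \<rho> "(0, V)"] by simp
        qed
        then have "onorm (\<lambda>\<rho>. f2 b (p r) (0, \<rho> *\<^sub>R V)) = norm (f2 b (p r) (0, V))"
          using onorm_scaleR_left[OF bounded_linear_ident, of "f2 b (p r) (0, V)"] by (simp add: onorm_id)
        also have "\<dots> \<le> norm (0::real^'n^'n, V) * (\<Sum>b'\<in>Basis. norm (f2 b (p r) b'))"
          by (rule lin_bound[OF lin])
        also have "\<dots> \<le> norm V * Mb b"
          unfolding Mb_def nP by (intro mult_left_mono sum_mono M[OF pK[OF r]]) simp_all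
        finally show ?thesis .
      qed
      have "norm (f' (p t) b - f' (p 0) b) \<le> norm V * Mb b * norm (t - 0)"
        by (rule differentiable_bound[OF convex_real_interval(5) der bd t]) auto
      then show ?thesis using t by simp
    qed
    define \<psi> where "\<psi> t = h (p t) - Q - t *\<^sub>R V" for t
    have der\<psi>: "(\<psi> has_derivative (\<lambda>\<rho>. f' (p t) (0, \<rho> *\<^sub>R V) - \<rho> *\<^sub>R V)) (at t within {0..1})" for t
    proof -
      have "((\<lambda>t. h (p t)) has_derivative (\<lambda>\<rho>. f' (p t) (0, \<rho> *\<^sub>R V))) (at t within {0..1})"
        by (rule has_derivative_compose[OF dp D1[OF pU]])
      then show ?thesis unfolding \<psi>_def by (auto intro!: derivative_eq_intros)
    qed
    have bd\<psi>: "onorm (\<lambda>\<rho>. f' (p t) (0, \<rho> *\<^sub>R V) - \<rho> *\<^sub>R V) \<le> Mt * (norm V)^2" if t: "t \<in> {0..1}" for t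
    proof -
      have lin1: "linear (f' (p t))" using D1[OF pU] by (rule has_derivative_linear)
      have lin0: "linear (f' (p 0))" using D1[OF pU] by (rule has_derivative_linear)
      have linL: "linear (\<lambda>w. f' (p t) w - f' (p 0) w)" by (rule linear_compose_sub[OF lin1 lin0])
      have "(\<lambda>\<rho>. f' (p t) (0, \<rho> *\<^sub>R V) - \<rho> *\<^sub>R V) = (\<lambda>\<rho>. \<rho> *\<^sub>R (f' (p t) (0, V) - V))"
      proof
        fix \<rho> :: real
        have "(0::real^'n^'n, \<rho> *\<^sub>R V) = \<rho> *\<^sub>R (0, V)" by simp
        then show "f' (p t) (0, \<rho> *\<^sub>R V) - \<rho> *\<^sub>R V = \<rho> *\<^sub>R (f' (p t) (0, V) - V)"
          using linear_scale[OF lin1, of \<rho> "(0, V)"] by (simp add: scaleR_diff_right)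
      qed
      then have "onorm (\<lambda>\<rho>. f' (p t) (0, \<rho> *\<^sub>R V) - \<rho> *\<^sub>R V) = norm (f' (p t) (0, V) - V)"
        using onorm_scaleR_left[OF bounded_linear_ident, of "f' (p t) (0, V) - V"] by (simp add: onorm_id)
      also have "\<dots> = norm (f' (p t) (0, V) - f' (p 0) (0, V))" by (simp add: f'0)
      also have "\<dots> \<le> norm (0::real^'n^'n, V) * (\<Sum>b\<in>Basis. norm (f' (p t) b - f' (p 0) b))"
        by (rule lin_bound[OF linL])
      also have "\<dots> \<le> norm V * (\<Sum>b\<in>Basis. norm V * Mb b * t)"
        unfolding nP by (intro mult_left_mono sum_mono st2[OF t]) simp_all
      also have "\<dots> = (norm V)^2 * Mt * t"
        by (simp add: Mt_def sum_distrib_left sum_distrib_right power2_eq_square mult_ac)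
      also have "\<dots> \<le> (norm V)^2 * Mt"
        using t Mt0 by (simp add: mult_left_le)
      finally show ?thesis by (simp add: mult_ac)
    qed
    have "norm (\<psi> 1 - \<psi> 0) \<le> Mt * (norm V)^2 * norm (1 - 0::real)"
      by (rule differentiable_bound[OF convex_real_interval(5) der\<psi> bd\<psi>]) auto
    moreover have "\<psi> 1 = R Q V - Q - V" using hR[OF pTB[of 1]] by (simp add: \<psi>_def p_def)
    moreover have "\<psi> 0 = 0" using hR[OF pTB[of 0]] R0[OF Q] by (simp add: \<psi>_def p_def)
    ultimately show ?thesis by simp
  qed
  show ?thesis
  proof (intro exI[of _ "Mt + (2 * ?c + 1)"] ballI)
    fix Q V :: "real^'n^'n" assume Q: "Q \<in> orth_group" and V: "V \<in> tangent_orth Q"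
    show "norm (R Q V - Q - V) \<le> (Mt + (2 * ?c + 1)) * (norm V)^2"
    proof (cases "norm V \<le> 1")
      case True
      have "norm (R Q V - Q - V) \<le> Mt * (norm V)^2" by (rule small[OF Q V True])
      also have "\<dots> \<le> (Mt + (2 * ?c + 1)) * (norm V)^2" by (intro mult_right_mono) auto
      finally show ?thesis .
    next
      case False
      have "norm (R Q V - Q - V) \<le> (2 * ?c + 1) * (norm V)^2"
        by (rule large_V_bound) (use False orth_group_norm[OF Q] orth_group_norm[OF Rorth[OF Q V]] in auto)
      also have "\<dots> \<le> (Mt + (2 * ?c + 1)) * (norm V)^2" using Mt0 by (intro mult_right_mono) auto
      finally show ?thesis .
    qed
  qed
qed

lemma mm_diff_left: "((A::real^'k^'n) - B) ** (C::real^'m^'k) = A ** C - B ** C"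
  by (rule bounded_bilinear.diff_left[OF mm_bilinear])

lemma mm_diff_right: "(A::real^'k^'n) ** ((B::real^'m^'k) - C) = A ** B - A ** C"
  by (rule bounded_bilinear.diff_right[OF mm_bilinear])

lemma transpose_diff: "transpose ((A::real^'m^'n) - B) = transpose A - transpose B"
  by (simp add: transpose_def vec_eq_iff)

lemma Diag_diff: "Diag (a - b) = Diag a - Diag b"
  by (simp add: Diag_def vec_eq_iff)

lemma norm_mm3: "norm ((A::real^'k^'n) ** (B::real^'j^'k) ** (C::real^'m^'j)) \<le> norm A * norm B * norm C"
proof -
  have "norm (A ** B ** C) \<le> norm (A ** B) * norm C" by (rule frob_mult)
  also have "\<dots> \<le> norm A * norm B * norm C" by (intro mult_right_mono frob_mult) simp
  finally show ?thesis .
qed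

lemma conj_lip:
  fixes Y1 Y2 :: "real^'n^'n"
  assumes "norm Y1 \<le> c" "norm Y2 \<le> c" "norm l \<le> D"
  shows "norm (Y1 ** Diag l ** transpose Y1 - Y2 ** Diag l ** transpose Y2) \<le> 2 * c * D * norm (Y1 - Y2)"
proof -
  have D0: "0 \<le> D" "0 \<le> c" using assms norm_ge_zero order_trans by blast+
  have eq: "Y1 ** Diag l ** transpose Y1 - Y2 ** Diag l ** transpose Y2
      = (Y1 - Y2) ** Diag l ** transpose Y1 + Y2 ** Diag l ** transpose (Y1 - Y2)"
    by (simp add: mm_diff_left mm_diff_right transpose_diff)
  have "norm ((Y1 - Y2) ** Diag l ** transpose Y1) \<le> norm (Y1 - Y2) * norm l * norm Y1"
    using norm_mm3[of "Y1 - Y2" "Diag l" "transpose Y1"] by (simp add: norm_Diag norm_transpose)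
  also have "\<dots> \<le> norm (Y1 - Y2) * D * c"
    using assms D0 by (intro mult_mono) auto
  finally have 1: "norm ((Y1 - Y2) ** Diag l ** transpose Y1) \<le> norm (Y1 - Y2) * D * c" .
  have "norm (Y2 ** Diag l ** transpose (Y1 - Y2)) \<le> norm Y2 * norm l * norm (Y1 - Y2)"
    using norm_mm3[of Y2 "Diag l" "transpose (Y1 - Y2)"] by (simp add: norm_Diag norm_transpose)
  also have "\<dots> \<le> c * D * norm (Y1 - Y2)"
    using assms D0 by (intro mult_mono) auto
  finally have 2: "norm (Y2 ** Diag l ** transpose (Y1 - Y2)) \<le> c * D * norm (Y1 - Y2)" .
  show ?thesis unfolding eq using norm_triangle_le[OF add_mono[OF 1 2]] by (simp add: algebra_simps)
qed

lemma grad_bound: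
  assumes F_lip: "\<And>X1 X2. X1 \<in> sym_mats \<Longrightarrow> X2 \<in> sym_mats \<Longrightarrow>
                  norm (gradF X1 - gradF X2) \<le> L_F * norm (X1 - X2)"
    and X: "X \<in> sym_mats"
  shows "norm (gradF X) \<le> norm (gradF 0) + L_F * norm X"
proof -
  have "0 \<in> sym_mats" by (simp add: sym_mats_def transpose_zero')
  from F_lip[OF X this] have "norm (gradF X - gradF 0) \<le> L_F * norm X" by simp
  then show ?thesis using norm_triangle_ineq2[of "gradF X" "gradF 0"] by simp
qed

lemma conj_norm:
  fixes Y :: "real^'n^'n"
  assumes "norm Y \<le> c" "norm l \<le> D"
  shows "norm (Y ** Diag l ** transpose Y) \<le> c * D * c"
proof -
  have "norm (Y ** Diag l ** transpose Y) \<le> norm Y * norm l * norm Y"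
    using norm_mm3[of Y "Diag l" "transpose Y"] by (simp add: norm_Diag norm_transpose)
  also have "\<dots> \<le> c * D * c"
  proof -
    have D0: "0 \<le> D" "0 \<le> c" using assms norm_ge_zero order_trans by blast+
    then show ?thesis using assms by (intro mult_mono) auto
  qed
  finally show ?thesis .
qed

lemma descent_generic:
  fixes g :: "'a::real_inner \<Rightarrow> real"
  assumes der: "\<And>Y. (g has_derivative (\<lambda>H. gr Y \<bullet> H)) (at Y)"
    and S: "convex S"
    and lip: "\<And>Y1 Y2. Y1 \<in> S \<Longrightarrow> Y2 \<in> S \<Longrightarrow> norm (gr Y1 - gr Y2) \<le> Lg * norm (Y1 - Y2)"
    and Q: "Q \<in> S" and Y: "Y \<in> S" and Lg: "0 \<le> Lg"
  shows "g Y \<le> g Q + gr Q \<bullet> (Y - Q) + Lg * (norm (Y - Q))^2"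
proof -
  define a where "a = gr Q \<bullet> (Y - Q)"
  define z where "z t = Q + t *\<^sub>R (Y - Q)" for t :: real
  define \<psi> where "\<psi> t = g (z t) - t * a" for t
  have zS: "z t \<in> S" if "t \<in> {0..1}" for t
  proof -
    have "z t = (1 - t) *\<^sub>R Q + t *\<^sub>R Y" by (simp add: z_def algebra_simps)
    then show ?thesis using convexD[OF S Q Y, of "1 - t" t] that by simp
  qed
  have dz: "(z has_derivative (\<lambda>\<rho>. \<rho> *\<^sub>R (Y - Q))) (at t within T)" for t T
    unfolding z_def by (auto intro!: derivative_eq_intros)
  have d\<psi>: "(\<psi> has_derivative (\<lambda>\<rho>. \<rho> * ((gr (z t) - gr Q) \<bullet> (Y - Q)))) (at t within {0..1})" for t
  proof -
    have "((\<lambda>t. g (z t)) has_derivative (\<lambda>\<rho>. gr (z t) \<bullet> (\<rho> *\<^sub>R (Y - Q)))) (at t within {0..1})"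
      by (rule has_derivative_compose[OF dz der])
    then have "(\<psi> has_derivative (\<lambda>\<rho>. gr (z t) \<bullet> (\<rho> *\<^sub>R (Y - Q)) - \<rho> * a)) (at t within {0..1})"
      unfolding \<psi>_def by (auto intro!: derivative_eq_intros)
    then show ?thesis by (simp add: a_def inner_diff_left algebra_simps)
  qed
  have b\<psi>: "onorm (\<lambda>\<rho>. \<rho> * ((gr (z t) - gr Q) \<bullet> (Y - Q))) \<le> Lg * (norm (Y - Q))^2" if t: "t \<in> {0..1}" for t
  proof -
    have "onorm (\<lambda>\<rho>. \<rho> * ((gr (z t) - gr Q) \<bullet> (Y - Q))) = norm ((gr (z t) - gr Q) \<bullet> (Y - Q))"
      using onorm_scaleR_left[OF bounded_linear_ident, of "(gr (z t) - gr Q) \<bullet> (Y - Q)"] by (simp add: onorm_id)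
    also have "\<dots> \<le> norm (gr (z t) - gr Q) * norm (Y - Q)"
      by (simp add: Cauchy_Schwarz_ineq2)
    also have "\<dots> \<le> (Lg * norm (z t - Q)) * norm (Y - Q)"
      by (intro mult_right_mono lip zS t Q) simp
    also have "\<dots> = Lg * t * (norm (Y - Q))^2" using t by (simp add: z_def power2_eq_square)
    also have "\<dots> \<le> Lg * (norm (Y - Q))^2"
    proof -
      have "t * (Lg * (norm (Y - Q))^2) \<le> Lg * (norm (Y - Q))^2"
        by (rule mult_left_le_one_le) (use t Lg in auto)
      then show ?thesis by (simp add: mult_ac)
    qed
    finally show ?thesis .
  qed
  have "norm (\<psi> 1 - \<psi> 0) \<le> Lg * (norm (Y - Q))^2 * norm (1 - 0::real)"
    by (rule differentiable_bound[OF convex_real_interval(5) d\<psi> b\<psi>]) auto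
  then have "\<psi> 1 - \<psi> 0 \<le> Lg * (norm (Y - Q))^2" by simp
  moreover have "\<psi> 1 - \<psi> 0 = g Y - a - g Q" by (simp add: \<psi>_def z_def)
  ultimately show ?thesis by (simp add: a_def)
qed

lemma gr_lip:
  fixes Y1 Y2 :: "real^'n^'n" and F :: "real^'n^'n \<Rightarrow> real"
  assumes F_lip: "\<And>X1 X2. X1 \<in> sym_mats \<Longrightarrow> X2 \<in> sym_mats \<Longrightarrow>
                  norm (gradF X1 - gradF X2) \<le> L_F * norm (X1 - X2)"
    and LF: "0 \<le> L_F" and Y1: "norm Y1 \<le> c" and Y2: "norm Y2 \<le> c" and l: "norm l \<le> D"
  shows "norm (2 *\<^sub>R (gradF (Y1 ** Diag l ** transpose Y1) ** Y1 ** Diag l)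
             - 2 *\<^sub>R (gradF (Y2 ** Diag l ** transpose Y2) ** Y2 ** Diag l))
         \<le> 2 * (L_F * (2 * c * D) * c * D + (norm (gradF 0) + L_F * (c * D * c)) * D) * norm (Y1 - Y2)"
proof -
  have D0: "0 \<le> D" "0 \<le> c" using l Y1 norm_ge_zero order_trans by blast+
  let ?X1 = "Y1 ** Diag l ** transpose Y1" and ?X2 = "Y2 ** Diag l ** transpose Y2"
  let ?G1 = "gradF ?X1" and ?G2 = "gradF ?X2"
  have eq: "2 *\<^sub>R (?G1 ** Y1 ** Diag l) - 2 *\<^sub>R (?G2 ** Y2 ** Diag l)
      = 2 *\<^sub>R ((?G1 - ?G2) ** Y1 ** Diag l + ?G2 ** (Y1 - Y2) ** Diag l)"
    by (simp add: mm_diff_left mm_diff_right scaleR_diff_right)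
  have dG: "norm (?G1 - ?G2) \<le> L_F * (2 * c * D * norm (Y1 - Y2))"
    using F_lip[OF sym_conj sym_conj] conj_lip[OF Y1 Y2 l] LF
    by (meson mult_left_mono order_trans)
  have G2: "norm ?G2 \<le> norm (gradF 0) + L_F * (c * D * c)"
    using grad_bound[OF F_lip sym_conj, of Y2 l] conj_norm[OF Y2 l] LF
    by (meson add_left_mono mult_left_mono order_trans)
  have "norm ((?G1 - ?G2) ** Y1 ** Diag l) \<le> norm (?G1 - ?G2) * norm Y1 * norm l"
    using norm_mm3 by (metis norm_Diag)
  also have "\<dots> \<le> (L_F * (2 * c * D * norm (Y1 - Y2))) * c * D"
    using dG Y1 l D0 LF by (intro mult_mono) auto
  finally have 1: "norm ((?G1 - ?G2) ** Y1 ** Diag l) \<le> (L_F * (2 * c * D * norm (Y1 - Y2))) * c * D" .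
  have "norm (?G2 ** (Y1 - Y2) ** Diag l) \<le> norm ?G2 * norm (Y1 - Y2) * norm l"
    using norm_mm3 by (metis norm_Diag)
  also have "\<dots> \<le> (norm (gradF 0) + L_F * (c * D * c)) * norm (Y1 - Y2) * D"
    using G2 l D0 LF by (intro mult_mono) auto
  finally have 2: "norm (?G2 ** (Y1 - Y2) ** Diag l) \<le> (norm (gradF 0) + L_F * (c * D * c)) * norm (Y1 - Y2) * D" .
  have "norm (2 *\<^sub>R ((?G1 - ?G2) ** Y1 ** Diag l + ?G2 ** (Y1 - Y2) ** Diag l))
      \<le> 2 * (norm ((?G1 - ?G2) ** Y1 ** Diag l) + norm (?G2 ** (Y1 - Y2) ** Diag l))"
    using norm_triangle_ineq[of "(?G1 - ?G2) ** Y1 ** Diag l" "?G2 ** (Y1 - Y2) ** Diag l"] by simp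
  also have "\<dots> \<le> 2 * ((L_F * (2 * c * D * norm (Y1 - Y2))) * c * D + (norm (gradF 0) + L_F * (c * D * c)) * norm (Y1 - Y2) * D)"
    using 1 2 by simp
  also have "\<dots> = 2 * (L_F * (2 * c * D) * c * D + (norm (gradF 0) + L_F * (c * D * c)) * D) * norm (Y1 - Y2)"
    by (simp add: algebra_simps)
  finally show ?thesis unfolding eq .
qed

lemma gr_bound:
  fixes Y :: "real^'n^'n" and F :: "real^'n^'n \<Rightarrow> real"
  assumes F_lip: "\<And>X1 X2. X1 \<in> sym_mats \<Longrightarrow> X2 \<in> sym_mats \<Longrightarrow>
                  norm (gradF X1 - gradF X2) \<le> L_F * norm (X1 - X2)"
    and LF: "0 \<le> L_F" and Y: "norm Y \<le> c" and l: "norm l \<le> D"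
  shows "norm (2 *\<^sub>R (gradF (Y ** Diag l ** transpose Y) ** Y ** Diag l))
         \<le> 2 * (norm (gradF 0) + L_F * (c * D * c)) * c * D"
proof -
  have D0: "0 \<le> D" "0 \<le> c" using l Y norm_ge_zero order_trans by blast+
  have G: "norm (gradF (Y ** Diag l ** transpose Y)) \<le> norm (gradF 0) + L_F * (c * D * c)"
    using grad_bound[OF F_lip sym_conj, of Y l] conj_norm[OF Y l] LF
    by (meson add_left_mono mult_left_mono order_trans)
  have "norm (gradF (Y ** Diag l ** transpose Y) ** Y ** Diag l) \<le> norm (gradF (Y ** Diag l ** transpose Y)) * norm Y * norm l"
    using norm_mm3 by (metis norm_Diag)
  also have "\<dots> \<le> (norm (gradF 0) + L_F * (c * D * c)) * c * D"
    using G Y l D0 LF by (intro mult_mono) auto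
  finally have h: "norm (gradF (Y ** Diag l ** transpose Y) ** Y ** Diag l) \<le> (norm (gradF 0) + L_F * (c * D * c)) * c * D" .
  show ?thesis using mult_left_mono[OF h, of 2] by (simp add: mult_ac)
qed

lemma retr_ineq:
  fixes Rp :: "real^'n^'n \<Rightarrow> real^'n^'n \<Rightarrow> real^'n^'n" and F :: "real^'n^'n \<Rightarrow> real"
  assumes F_grad: "\<And>X. X \<in> sym_mats \<Longrightarrow> gradF X \<in> sym_mats \<and>
                     (F has_derivative (\<lambda>H. gradF X \<bullet> H)) (at X within sym_mats)"
    and F_lip: "\<And>X1 X2. X1 \<in> sym_mats \<Longrightarrow> X2 \<in> sym_mats \<Longrightarrow>
                  norm (gradF X1 - gradF X2) \<le> L_F * norm (X1 - X2)"
    and LF: "0 \<le> L_F" and l: "norm l \<le> D" and \<alpha>: "0 \<le> \<alpha>"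
    and Rp: "\<And>Q V. Q \<in> orth_group \<Longrightarrow> V \<in> tangent_orth Q \<Longrightarrow>
               Rp Q V \<in> orth_group \<and> norm (Rp Q V - Q - V) \<le> \<alpha> * (norm V)^2"
  defines "c \<equiv> sqrt (real CARD('n))"
  defines "Mg \<equiv> 2 * (norm (gradF 0) + L_F * (c * D * c)) * c * D"
  defines "Lg \<equiv> 2 * (L_F * (2 * c * D) * c * D + (norm (gradF 0) + L_F * (c * D * c)) * D)"
  shows "grad_lipschitz_retraction (\<lambda>Q. F (Q ** Diag l ** transpose Q)) Rp
           (2 * (Mg * \<alpha> + Lg * ((1 + \<alpha>)^2 + 4 * c^2)))"
  unfolding grad_lipschitz_retraction_def
proof (intro ballI)
  fix Q V :: "real^'n^'n"
  assume Q: "Q \<in> orth_group" and V: "V \<in> tangent_orth Q"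
  let ?g = "\<lambda>Q. F (Q ** Diag l ** transpose Q)"
  let ?gr = "\<lambda>Y. 2 *\<^sub>R (gradF (Y ** Diag l ** transpose Y) ** Y ** Diag l)"
  let ?Y = "Rp Q V"
  let ?\<beta> = "(1 + \<alpha>)^2 + 4 * c^2"
  have D0: "0 \<le> D" "0 \<le> c" using l norm_ge_zero order_trans by (blast, simp add: c_def)
  have Y: "?Y \<in> orth_group" and rem: "norm (?Y - Q - V) \<le> \<alpha> * (norm V)^2" using Rp[OF Q V] by auto
  have nQ: "norm Q = c" and nY: "norm ?Y = c" using orth_group_norm Q Y by (auto simp: c_def)
  have Mg0: "0 \<le> Mg" unfolding Mg_def using D0 LF by simp
  have Lg0: "0 \<le> Lg" unfolding Lg_def using D0 LF by simp
  have desc: "?g ?Y \<le> ?g Q + ?gr Q \<bullet> (?Y - Q) + Lg * (norm (?Y - Q))^2"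
  proof (rule descent_generic[where S="cball 0 c"])
    show "\<And>Y. (?g has_derivative (\<lambda>H. ?gr Y \<bullet> H)) (at Y)" by (rule g_grad[OF F_grad])
    show "convex (cball (0::real^'n^'n) c)" by simp
    show "\<And>Y1 Y2. Y1 \<in> cball 0 c \<Longrightarrow> Y2 \<in> cball 0 c \<Longrightarrow> norm (?gr Y1 - ?gr Y2) \<le> Lg * norm (Y1 - Y2)"
      unfolding Lg_def by (rule gr_lip[OF F_lip LF _ _ l]) auto
  qed (use nQ nY Lg0 in auto)
  have rg: "riem_grad ?g Q \<bullet> V = ?gr Q \<bullet> V"
    using riem_grad_inner[OF V] eucl_grad_eq[OF g_grad[OF F_grad]] by simp
  have grQ: "norm (?gr Q) \<le> Mg"
  proof -
    have "norm Q \<le> c" using nQ by simp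
    from gr_bound[OF F_lip LF this l] show ?thesis unfolding Mg_def .
  qed
  have t1: "?gr Q \<bullet> (?Y - Q) \<le> ?gr Q \<bullet> V + Mg * \<alpha> * (norm V)^2"
  proof -
    have "?gr Q \<bullet> (?Y - Q) = ?gr Q \<bullet> V + ?gr Q \<bullet> (?Y - Q - V)" by (simp add: inner_diff_right)
    also have "?gr Q \<bullet> (?Y - Q - V) \<le> norm (?gr Q) * norm (?Y - Q - V)" by (rule norm_cauchy_schwarz)
    also have "\<dots> \<le> Mg * (\<alpha> * (norm V)^2)" using grQ rem Mg0 by (intro mult_mono) auto
    finally show ?thesis by (simp add: mult_ac)
  qed
  have t2: "(norm (?Y - Q))^2 \<le> ?\<beta> * (norm V)^2"
  proof (cases "norm V \<le> 1")
    case True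
    have "norm (?Y - Q) \<le> norm V + norm (?Y - Q - V)"
      using norm_triangle_ineq[of V "?Y - Q - V"] by simp
    also have "\<dots> \<le> norm V + \<alpha> * (norm V)^2" using rem by simp
    also have "\<dots> \<le> (1 + \<alpha>) * norm V"
    proof -
      have "\<alpha> * (norm V * norm V) \<le> \<alpha> * (1 * norm V)"
        using True \<alpha> by (intro mult_left_mono mult_right_mono) auto
      then show ?thesis by (simp add: power2_eq_square algebra_simps)
    qed
    finally have "(norm (?Y - Q))^2 \<le> ((1 + \<alpha>) * norm V)^2" by (intro power_mono) auto
    also have "\<dots> \<le> ?\<beta> * (norm V)^2" unfolding power_mult_distrib by (intro mult_right_mono) auto
    finally show ?thesis .
  next
    case False
    have "norm (?Y - Q) \<le> 2 * c" using norm_triangle_ineq4[of ?Y Q] nQ nY by simp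
    then have "(norm (?Y - Q))^2 \<le> (2 * c)^2" by (intro power_mono) auto
    also have "\<dots> = 4 * c^2 * 1" by (simp add: power_mult_distrib)
    also have "\<dots> \<le> 4 * c^2 * (norm V)^2" using False by (intro mult_left_mono) (auto simp: one_le_power)
    also have "\<dots> \<le> ?\<beta> * (norm V)^2" by (intro mult_right_mono) auto
    finally show ?thesis .
  qed
  have "?g ?Y \<le> ?g Q + (?gr Q \<bullet> V + Mg * \<alpha> * (norm V)^2) + Lg * (?\<beta> * (norm V)^2)"
    using desc t1 mult_left_mono[OF t2 Lg0] by linarith
  moreover have "2 * (Mg * \<alpha> + Lg * ?\<beta>) / 2 * (norm V)^2 = Mg * \<alpha> * (norm V)^2 + Lg * (?\<beta> * (norm V)^2)"
    by (simp add: algebra_simps)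
  ultimately show "?g ?Y \<le> ?g Q + riem_grad ?g Q \<bullet> V + 2 * (Mg * \<alpha> + Lg * ?\<beta>) / 2 * (norm V)^2"
    unfolding rg by linarith
qed

lemma glr_mono:
  fixes g :: "real^'n^'n \<Rightarrow> real" and R :: "real^'n^'n \<Rightarrow> real^'n^'n \<Rightarrow> real^'n^'n"
  assumes "grad_lipschitz_retraction g R L" "L \<le> L'"
  shows "grad_lipschitz_retraction g R L'"
  unfolding grad_lipschitz_retraction_def
proof (intro ballI)
  fix Q V :: "real^'n^'n" assume Q: "Q \<in> orth_group" and V: "V \<in> tangent_orth Q"
  have "g (R Q V) \<le> g Q + riem_grad g Q \<bullet> V + L / 2 * (norm V)^2"
    using assms(1) Q V unfolding grad_lipschitz_retraction_def by blast
  moreover have "L / 2 * (norm V)^2 \<le> L' / 2 * (norm V)^2"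
    using assms(2) by (intro mult_right_mono) auto
  ultimately show "g (R Q V) \<le> g Q + riem_grad g Q \<bullet> V + L' / 2 * (norm V)^2" by linarith
qed

lemma retr_ineq_ex:
  fixes Rp :: "real^'n^'n \<Rightarrow> real^'n^'n \<Rightarrow> real^'n^'n" and F :: "real^'n^'n \<Rightarrow> real"
  assumes F_grad: "\<And>X. X \<in> sym_mats \<Longrightarrow> gradF X \<in> sym_mats \<and>
                     (F has_derivative (\<lambda>H. gradF X \<bullet> H)) (at X within sym_mats)"
    and F_lip: "\<And>X1 X2. X1 \<in> sym_mats \<Longrightarrow> X2 \<in> sym_mats \<Longrightarrow>
                  norm (gradF X1 - gradF X2) \<le> L_F * norm (X1 - X2)"
    and LF: "0 \<le> L_F"
    and Rp: "\<exists>\<alpha>. \<forall>Q\<in>orth_group. \<forall>V\<in>tangent_orth Q. norm (Rp Q V - Q - V) \<le> \<alpha> * (norm V)^2"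
    and Ro: "\<And>Q V. Q \<in> orth_group \<Longrightarrow> V \<in> tangent_orth Q \<Longrightarrow> Rp Q V \<in> orth_group"
  shows "\<exists>L. \<forall>l::real^'n. norm l \<le> D \<longrightarrow> grad_lipschitz_retraction (\<lambda>Q. F (Q ** Diag l ** transpose Q)) Rp L"
proof -
  obtain \<alpha>1 where a1: "\<forall>Q\<in>orth_group. \<forall>V\<in>tangent_orth Q. norm (Rp Q V - Q - V) \<le> \<alpha>1 * (norm V)^2"
    using Rp by blast
  let ?\<alpha> = "max \<alpha>1 0"
  have a: "Rp Q V \<in> orth_group \<and> norm (Rp Q V - Q - V) \<le> ?\<alpha> * (norm V)^2"
    if "Q \<in> orth_group" "V \<in> tangent_orth Q" for Q V
  proof -
    have "\<alpha>1 * (norm V)^2 \<le> ?\<alpha> * (norm V)^2" by (intro mult_right_mono) auto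
    moreover have "norm (Rp Q V - Q - V) \<le> \<alpha>1 * (norm V)^2" using a1 that by blast
    ultimately show ?thesis using that Ro by simp
  qed
  let ?c = "sqrt (real CARD('n))"
  define L0 where "L0 = 2 * (2 * (norm (gradF 0) + L_F * (?c * D * ?c)) * ?c * D * ?\<alpha>
     + 2 * (L_F * (2 * ?c * D) * ?c * D + (norm (gradF 0) + L_F * (?c * D * ?c)) * D) * ((1 + ?\<alpha>)^2 + 4 * ?c^2))"
  have "grad_lipschitz_retraction (\<lambda>Q. F (Q ** Diag l ** transpose Q)) Rp L0" if l: "norm l \<le> D" for l :: "real^'n"
    using retr_ineq[OF F_grad F_lip LF l _ a] unfolding L0_def by simp
  then show ?thesis by blast
qed

lemma part_i:
  fixes Q :: "real^'n^'n" and F :: "real^'n^'n \<Rightarrow> real"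
  assumes F_grad: "\<And>X. X \<in> sym_mats \<Longrightarrow> gradF X \<in> sym_mats \<and>
                     (F has_derivative (\<lambda>H. gradF X \<bullet> H)) (at X within sym_mats)"
    and F_lip: "\<And>X1 X2. X1 \<in> sym_mats \<Longrightarrow> X2 \<in> sym_mats \<Longrightarrow>
                  norm (gradF X1 - gradF X2) \<le> L_F * norm (X1 - X2)"
    and LF: "0 \<le> L_F" and Q: "Q \<in> orth_group"
  defines "c \<equiv> sqrt (real CARD('n))"
  shows "norm (eucl_grad (\<lambda>l. F (Q ** Diag l ** transpose Q)) l1 - eucl_grad (\<lambda>l. F (Q ** Diag l ** transpose Q)) l2)
         \<le> (c * c * L_F * (c * c)) * norm (l1 - l2)"
proof -
  let ?G = "\<lambda>l. gradF (Q ** Diag l ** transpose Q)"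
  have nQ: "norm Q = c" using orth_group_norm[OF Q] by (simp add: c_def)
  have e: "eucl_grad (\<lambda>l. F (Q ** Diag l ** transpose Q)) l = dg (transpose Q ** ?G l ** Q)" for l
    by (rule eucl_grad_eq[OF l_grad[OF F_grad]])
  have "dg (transpose Q ** ?G l1 ** Q) - dg (transpose Q ** ?G l2 ** Q) = dg (transpose Q ** (?G l1 - ?G l2) ** Q)"
    by (simp add: dg_diff mm_diff_left mm_diff_right)
  then have "norm (dg (transpose Q ** ?G l1 ** Q) - dg (transpose Q ** ?G l2 ** Q)) \<le> norm (transpose Q ** (?G l1 - ?G l2) ** Q)"
    using norm_dg[of "transpose Q ** (?G l1 - ?G l2) ** Q"] by simp
  also have "\<dots> \<le> c * norm (?G l1 - ?G l2) * c"
    using norm_mm3[of "transpose Q" "?G l1 - ?G l2" Q] by (simp add: norm_transpose nQ)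
  also have "\<dots> \<le> c * (L_F * (c * norm (l1 - l2) * c)) * c"
  proof -
    have "Q ** Diag l1 ** transpose Q - Q ** Diag l2 ** transpose Q = Q ** Diag (l1 - l2) ** transpose Q"
      by (simp add: Diag_diff mm_diff_left mm_diff_right)
    moreover have "norm (Q ** Diag (l1 - l2) ** transpose Q) \<le> c * norm (l1 - l2) * c"
      using norm_mm3[of Q "Diag (l1 - l2)" "transpose Q"] by (simp add: norm_transpose nQ norm_Diag)
    ultimately have "L_F * norm (Q ** Diag l1 ** transpose Q - Q ** Diag l2 ** transpose Q) \<le> L_F * (c * norm (l1 - l2) * c)"
      using mult_left_mono[OF _ LF] by simp
    moreover have "norm (?G l1 - ?G l2) \<le> L_F * norm (Q ** Diag l1 ** transpose Q - Q ** Diag l2 ** transpose Q)"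
      by (rule F_lip[OF sym_conj sym_conj])
    ultimately have "norm (?G l1 - ?G l2) \<le> L_F * (c * norm (l1 - l2) * c)" by linarith
    then show ?thesis by (intro mult_left_mono mult_right_mono) (auto simp: c_def)
  qed
  also have "\<dots> = (c * c * L_F * (c * c)) * norm (l1 - l2)" by (simp add: mult_ac)
  finally show ?thesis by (simp add: e)
qed

lemma part_iii:
  fixes U V :: "real^'n^'n" and F :: "real^'n^'n \<Rightarrow> real"
  assumes F_grad: "\<And>X. X \<in> sym_mats \<Longrightarrow> gradF X \<in> sym_mats \<and>
                     (F has_derivative (\<lambda>H. gradF X \<bullet> H)) (at X within sym_mats)"
    and F_lip: "\<And>X1 X2. X1 \<in> sym_mats \<Longrightarrow> X2 \<in> sym_mats \<Longrightarrow>
                  norm (gradF X1 - gradF X2) \<le> L_F * norm (X1 - X2)"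
    and LF: "0 \<le> L_F" and U: "U \<in> orth_group" and V: "V \<in> orth_group" and l: "norm l \<le> D"
  defines "c \<equiv> sqrt (real CARD('n))"
  defines "Gb \<equiv> norm (gradF 0) + L_F * (c * D * c)"
  shows "norm (eucl_grad (\<lambda>l. F (U ** Diag l ** transpose U)) l - eucl_grad (\<lambda>l. F (V ** Diag l ** transpose V)) l)
         \<le> (2 * c * Gb + c * (L_F * (2 * c * D)) * c) * norm (U - V)"
proof -
  have nU: "norm U = c" using orth_group_norm[OF U] by (simp add: c_def)
  have nV: "norm V = c" using orth_group_norm[OF V] by (simp add: c_def)
  have nU': "norm U \<le> c" and nV': "norm V \<le> c" using nU nV by simp_all
  have D0: "0 \<le> D" "0 \<le> c" using l norm_ge_zero order_trans by (blast, simp add: c_def)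
  let ?GU = "gradF (U ** Diag l ** transpose U)" and ?GV = "gradF (V ** Diag l ** transpose V)"
  have eU: "eucl_grad (\<lambda>l. F (U ** Diag l ** transpose U)) l = dg (transpose U ** ?GU ** U)"
    by (rule eucl_grad_eq[OF l_grad[OF F_grad]])
  have eV: "eucl_grad (\<lambda>l. F (V ** Diag l ** transpose V)) l = dg (transpose V ** ?GV ** V)"
    by (rule eucl_grad_eq[OF l_grad[OF F_grad]])
  have GX: "norm (gradF (W ** Diag l ** transpose W)) \<le> Gb" if W: "norm W \<le> c" for W :: "real^'n^'n"
  proof -
    have a: "norm (gradF (W ** Diag l ** transpose W)) \<le> norm (gradF 0) + L_F * norm (W ** Diag l ** transpose W)"
      by (rule grad_bound[OF F_lip sym_conj])
    have "norm (W ** Diag l ** transpose W) \<le> c * D * c" by (rule conj_norm[OF W l])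
    then have "L_F * norm (W ** Diag l ** transpose W) \<le> L_F * (c * D * c)" by (rule mult_left_mono[OF _ LF])
    then show ?thesis using a unfolding Gb_def by linarith
  qed
  have GU: "norm ?GU \<le> Gb" by (rule GX[OF nU'])
  have GV: "norm ?GV \<le> Gb" by (rule GX[OF nV'])
  have Gb0: "0 \<le> Gb" using GU norm_ge_zero order_trans by blast
  have dG: "norm (?GU - ?GV) \<le> L_F * (2 * c * D * norm (U - V))"
  proof -
    have a: "norm (?GU - ?GV) \<le> L_F * norm (U ** Diag l ** transpose U - V ** Diag l ** transpose V)"
      by (rule F_lip[OF sym_conj sym_conj])
    have "norm (U ** Diag l ** transpose U - V ** Diag l ** transpose V) \<le> 2 * c * D * norm (U - V)"
      by (rule conj_lip[OF nU' nV' l])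
    then have "L_F * norm (U ** Diag l ** transpose U - V ** Diag l ** transpose V) \<le> L_F * (2 * c * D * norm (U - V))"
      by (rule mult_left_mono[OF _ LF])
    then show ?thesis using a by linarith
  qed
  have eq: "transpose U ** ?GU ** U - transpose V ** ?GV ** V
      = transpose (U - V) ** ?GU ** U + transpose V ** (?GU - ?GV) ** U + transpose V ** ?GV ** (U - V)"
    by (simp add: mm_diff_left mm_diff_right transpose_diff)
  have 1: "norm (transpose (U - V) ** ?GU ** U) \<le> norm (U - V) * Gb * c"
  proof -
    have "norm (transpose (U - V) ** ?GU ** U) \<le> norm (U - V) * norm ?GU * norm U"
      using norm_mm3[of "transpose (U - V)" ?GU U] by (simp add: norm_transpose)
    also have "\<dots> \<le> norm (U - V) * Gb * c" using GU nU' D0 Gb0 by (intro mult_mono) auto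
    finally show ?thesis .
  qed
  have 2: "norm (transpose V ** (?GU - ?GV) ** U) \<le> c * (L_F * (2 * c * D * norm (U - V))) * c"
  proof -
    have "norm (transpose V ** (?GU - ?GV) ** U) \<le> norm V * norm (?GU - ?GV) * norm U"
      using norm_mm3[of "transpose V" "?GU - ?GV" U] by (simp add: norm_transpose)
    also have "\<dots> \<le> c * (L_F * (2 * c * D * norm (U - V))) * c"
      using dG nU' nV' D0 LF by (intro mult_mono) auto
    finally show ?thesis .
  qed
  have 3: "norm (transpose V ** ?GV ** (U - V)) \<le> c * Gb * norm (U - V)"
  proof -
    have "norm (transpose V ** ?GV ** (U - V)) \<le> norm V * norm ?GV * norm (U - V)"
      using norm_mm3[of "transpose V" ?GV "U - V"] by (simp add: norm_transpose)
    also have "\<dots> \<le> c * Gb * norm (U - V)" using GV nV' D0 Gb0 by (intro mult_mono) auto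
    finally show ?thesis .
  qed
  have "norm (dg (transpose U ** ?GU ** U) - dg (transpose V ** ?GV ** V))
        \<le> norm (transpose U ** ?GU ** U - transpose V ** ?GV ** V)"
    unfolding dg_diff by (rule norm_dg)
  also have "\<dots> \<le> norm (transpose (U - V) ** ?GU ** U + transpose V ** (?GU - ?GV) ** U)
                     + norm (transpose V ** ?GV ** (U - V))"
    unfolding eq by (rule norm_triangle_ineq)
  also have "\<dots> \<le> norm (transpose (U - V) ** ?GU ** U) + norm (transpose V ** (?GU - ?GV) ** U)
                     + norm (transpose V ** ?GV ** (U - V))"
    using norm_triangle_ineq[of "transpose (U - V) ** ?GU ** U" "transpose V ** (?GU - ?GV) ** U"] by linarith
  also have "\<dots> \<le> norm (U - V) * Gb * c + c * (L_F * (2 * c * D * norm (U - V))) * c + c * Gb * norm (U - V)"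
    using 1 2 3 by linarith
  also have "\<dots> = (2 * c * Gb + c * (L_F * (2 * c * D)) * c) * norm (U - V)"
    by (simp add: algebra_simps)
  finally show ?thesis by (simp add: eU eV)
qed

theorem theorem5:
  fixes F :: "real^'n^'n \<Rightarrow> real"
    and gradF :: "real^'n^'n \<Rightarrow> real^'n^'n"
    and L_F D :: real
    and C :: "(real^'n) set"
    and R :: "real^'n^'n \<Rightarrow> real^'n^'n \<Rightarrow> real^'n^'n"
  assumes F_grad: "\<And>X. X \<in> sym_mats \<Longrightarrow> gradF X \<in> sym_mats \<and>
                     (F has_derivative (\<lambda>H. gradF X \<bullet> H)) (at X within sym_mats)"
    and F_lip: "\<And>X1 X2. X1 \<in> sym_mats \<Longrightarrow> X2 \<in> sym_mats \<Longrightarrow>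
                  norm (gradF X1 - gradF X2) \<le> L_F * norm (X1 - X2)"
    and L_F_pos: "L_F > 0"
    and C_bdd: "\<And>l. l \<in> C \<Longrightarrow> norm l \<le> D"
    and R_retr: "is_retraction R"
  defines "f \<equiv> (\<lambda>Q l. F (Q ** Diag l ** transpose Q))"
  shows "(\<exists>L_y\<ge>0. \<forall>Q\<in>orth_group. \<forall>l1\<in>C. \<forall>l2\<in>C.
            norm (eucl_grad (f Q) l1 - eucl_grad (f Q) l2) \<le> L_y * norm (l1 - l2))
       \<and> (\<exists>L_x\<ge>1. \<forall>l\<in>C.
            grad_lipschitz_retraction (\<lambda>Q. f Q l) exp_orth L_x \<and>
            grad_lipschitz_retraction (\<lambda>Q. f Q l) R L_x)
       \<and> (\<exists>L_xy\<ge>0. \<forall>U\<in>orth_group. \<forall>V\<in>orth_group. \<forall>l\<in>C.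
            norm (eucl_grad (f U) l - eucl_grad (f V) l) \<le> L_xy * norm (U - V))"
proof -
  have LF: "0 \<le> L_F" using L_F_pos by simp
  let ?c = "sqrt (real CARD('n))"
  define Dp where "Dp = max D 0"
  have lD: "\<And>l. l \<in> C \<Longrightarrow> norm l \<le> Dp" using C_bdd by (simp add: Dp_def le_max_iff_disj)
  have Dp0: "0 \<le> Dp" by (simp add: Dp_def)
  have c0: "0 \<le> ?c" by simp
  have P1: "\<exists>L_y\<ge>0. \<forall>Q\<in>orth_group. \<forall>l1\<in>C. \<forall>l2\<in>C.
            norm (eucl_grad (f Q) l1 - eucl_grad (f Q) l2) \<le> L_y * norm (l1 - l2)"
  proof (intro exI[of _ "?c * ?c * L_F * (?c * ?c)"] conjI ballI)
    show "0 \<le> ?c * ?c * L_F * (?c * ?c)" using LF by simp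
    fix Q :: "real^'n^'n" and l1 l2 assume Q: "Q \<in> orth_group" and "l1 \<in> C" "l2 \<in> C"
    show "norm (eucl_grad (f Q) l1 - eucl_grad (f Q) l2) \<le> ?c * ?c * L_F * (?c * ?c) * norm (l1 - l2)"
      using part_i[OF F_grad F_lip LF Q, of l1 l2] unfolding f_def by simp
  qed
  have Ro: "\<And>Q V. Q \<in> orth_group \<Longrightarrow> V \<in> tangent_orth Q \<Longrightarrow> R Q V \<in> orth_group"
    using R_retr unfolding is_retraction_def tangent_bundle_orth_def by auto
  obtain L1 where L1: "\<forall>l::real^'n. norm l \<le> Dp \<longrightarrow>
      grad_lipschitz_retraction (\<lambda>Q. F (Q ** Diag l ** transpose Q)) exp_orth L1"
    using retr_ineq_ex[OF F_grad F_lip LF exp_orth_rem exp_orth_orth, of Dp] by blast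
  obtain L2 where L2: "\<forall>l::real^'n. norm l \<le> Dp \<longrightarrow>
      grad_lipschitz_retraction (\<lambda>Q. F (Q ** Diag l ** transpose Q)) R L2"
    using retr_ineq_ex[OF F_grad F_lip LF retr_rem[OF R_retr] Ro, of Dp] by blast
  have P2: "\<exists>L_x\<ge>1. \<forall>l\<in>C.
            grad_lipschitz_retraction (\<lambda>Q. f Q l) exp_orth L_x \<and>
            grad_lipschitz_retraction (\<lambda>Q. f Q l) R L_x"
  proof (intro exI[of _ "max 1 (max L1 L2)"] conjI ballI)
    show "1 \<le> max 1 (max L1 L2)" by simp
    fix l assume l: "l \<in> C"
    show "grad_lipschitz_retraction (\<lambda>Q. f Q l) exp_orth (max 1 (max L1 L2))"
      unfolding f_def by (rule glr_mono[OF L1[rule_format, OF lD[OF l]]]) simp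
    show "grad_lipschitz_retraction (\<lambda>Q. f Q l) R (max 1 (max L1 L2))"
      unfolding f_def by (rule glr_mono[OF L2[rule_format, OF lD[OF l]]]) simp
  qed
  have P3: "\<exists>L_xy\<ge>0. \<forall>U\<in>orth_group. \<forall>V\<in>orth_group. \<forall>l\<in>C.
            norm (eucl_grad (f U) l - eucl_grad (f V) l) \<le> L_xy * norm (U - V)"
  proof (intro exI[of _ "2 * ?c * (norm (gradF 0) + L_F * (?c * Dp * ?c)) + ?c * (L_F * (2 * ?c * Dp)) * ?c"]
        conjI ballI)
    show "0 \<le> 2 * ?c * (norm (gradF 0) + L_F * (?c * Dp * ?c)) + ?c * (L_F * (2 * ?c * Dp)) * ?c"
      using LF Dp0 by simp
    fix U V :: "real^'n^'n" and l assume U: "U \<in> orth_group" and V: "V \<in> orth_group" and l: "l \<in> C"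
    show "norm (eucl_grad (f U) l - eucl_grad (f V) l)
          \<le> (2 * ?c * (norm (gradF 0) + L_F * (?c * Dp * ?c)) + ?c * (L_F * (2 * ?c * Dp)) * ?c) * norm (U - V)"
      using part_iii[OF F_grad F_lip LF U V lD[OF l]] unfolding f_def by simp
  qed
  show ?thesis using P1 P2 P3 by blast
qed


end
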